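(* Let $X=\mathbb T^2=\mathbb R^2/\mathbb Z^2$ with Haar measure $\mu$, and let $\rho_t(v)=tv$ for $v\in\mathbb R^2$, $t\in\mathbb R$. There exists a function $\phi\colon(0,1)\to\mathbb R^2$ such that for every $x_0\in\mathbb T^2$, the family of measures $(\mu_t)_{t\ge0}$ defined by $\int_Xf\,d\mu_t=\int_0^1 f(t\phi(u)+x_0)\,du$ for $f\in C(X)$ is weakly equidistributed but not equidistributed on $X$.
   Context: A family $(\mu_t)_{t\ge0}$ of probability measures on $X$ is equidistributed if $\int f\,d\mu_t\to\int f\,d\mu$ as $t\to\infty$ for all $f\in C(X)$; it is weakly equidistributed if there is a set $A\subset[0,\infty)$ with $\lim_{T\to\infty}\lambda(A\cap[0,T])/T=1$ ($\lambda$ Lebesgue measure) such that $\int f\,d\mu_t\to\int f\,d\mu$ as $t\to\infty$ with $t\in A$, for all $f\in C(X)$. *)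

theory Defs
  imports "HOL-Analysis.Analysis"
begin

text \<open>The torus T^2 = R^2/Z^2. A continuous function on T^2 is represented by a
continuous Z^2-periodic function on R^2; points of T^2 by representatives in R^2.\<close>

definition torus_fun :: "(real^2 \<Rightarrow> real) \<Rightarrow> bool" where
  "torus_fun f \<longleftrightarrow> continuous_on UNIV f \<and>
     (\<forall>v k. (\<forall>i. k $ i \<in> \<int>) \<longrightarrow> f (v + k) = f v)"

text \<open>Integral against the Haar (Lebesgue probability) measure of T^2,
computed over the fundamental domain [0,1]^2.\<close>
definition haar_int :: "(real^2 \<Rightarrow> real) \<Rightarrow> real" where
  "haar_int f = integral (cbox 0 One) f"

definition curve_int :: "(real \<Rightarrow> real^2) \<Rightarrow> real^2 \<Rightarrow> real \<Rightarrow> (real^2 \<Rightarrow> real) \<Rightarrow> real" where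
  "curve_int \<phi> x0 t f = integral {0<..<1} (\<lambda>u. f (t *\<^sub>R \<phi> u + x0))"

definition equidistributed :: "(real \<Rightarrow> (real^2 \<Rightarrow> real) \<Rightarrow> real) \<Rightarrow> bool" where
  "equidistributed \<mu> \<longleftrightarrow>
     (\<forall>f. torus_fun f \<longrightarrow> ((\<lambda>t. \<mu> t f) \<longlongrightarrow> haar_int f) at_top)"

definition weakly_equidistributed :: "(real \<Rightarrow> (real^2 \<Rightarrow> real) \<Rightarrow> real) \<Rightarrow> bool" where
  "weakly_equidistributed \<mu> \<longleftrightarrow>
     (\<exists>A. A \<subseteq> {0..} \<and> A \<in> sets lebesgue \<and>
        ((\<lambda>T. measure lebesgue (A \<inter> {0..T}) / T) \<longlongrightarrow> 1) at_top \<and>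
        (\<forall>f. torus_fun f \<longrightarrow>
           ((\<lambda>t. \<mu> t f) \<longlongrightarrow> haar_int f) (inf at_top (principal A))))"

end

theory Submission
  imports Defs
begin

definition cs :: "(nat \<Rightarrow> real) \<Rightarrow> real" where
  "cs b = (\<Sum>j. 2 * b j / 3 ^ Suc j)"

definition bnd01 :: "(nat \<Rightarrow> real) \<Rightarrow> bool" where
  "bnd01 b \<longleftrightarrow> (\<forall>j. 0 \<le> b j \<and> b j \<le> 1)"

lemma cs_summable: assumes "bnd01 b" shows "summable (\<lambda>j. 2 * b j / 3 ^ Suc j)"
proof (rule summable_comparison_test[where g = "\<lambda>j. 2 * (1/3) ^ Suc j"])
  show "\<exists>N. \<forall>n\<ge>N. norm (2 * b n / 3 ^ Suc n) \<le> 2 * (1 / 3) ^ Suc n"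
    using assms by (auto simp: bnd01_def power_one_over divide_le_cancel)
  show "summable (\<lambda>j. 2 * (1 / 3::real) ^ Suc j)"
    by (intro summable_mult summable_Suc_iff[THEN iffD2]) (simp add: summable_geometric)
qed

lemma geo3: "(\<Sum>j. 2 * (1/3::real) ^ Suc j) = 1"
proof -
  have "(\<Sum>j. 2 * (1/3::real) ^ Suc j) = (2/3) * (\<Sum>j. (1/3::real) ^ j)"
    by (subst suminf_mult[symmetric]) (auto simp: summable_geometric)
  also have "\<dots> = 1" by (subst suminf_geometric) auto
  finally show ?thesis .
qed

lemma cs_bounds: assumes "bnd01 b" shows "0 \<le> cs b" "cs b \<le> 1"
proof -
  show "0 \<le> cs b" unfolding cs_def
    using assms by (intro suminf_nonneg cs_summable) (auto simp: bnd01_def)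
  have "cs b \<le> (\<Sum>j. 2 * (1/3::real) ^ Suc j)" unfolding cs_def
  proof (rule suminf_le)
    show "summable (\<lambda>j. 2 * (1/3::real) ^ Suc j)"
      by (intro summable_mult summable_Suc_iff[THEN iffD2]) (simp add: summable_geometric)
  qed (use assms cs_summable in \<open>auto simp: bnd01_def power_one_over divide_le_cancel\<close>)
  then show "cs b \<le> 1" using geo3 by simp
qed

lemma bnd01_shift: "bnd01 b \<Longrightarrow> bnd01 (\<lambda>j. b (j + n))"
  by (auto simp: bnd01_def)

lemma cs_head: assumes "bnd01 b" shows "cs b = 2 * b 0 / 3 + cs (\<lambda>j. b (Suc j)) / 3"
proof -
  have s: "summable (\<lambda>j. 2 * b j / 3 ^ Suc j)" by (rule cs_summable[OF assms])
  have "cs b = (\<Sum>j. 2 * b (Suc j) / 3 ^ Suc (Suc j)) + 2 * b 0 / 3"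
    unfolding cs_def using suminf_split_head[OF s] by simp
  also have "(\<Sum>j. 2 * b (Suc j) / 3 ^ Suc (Suc j)) = (\<Sum>j. 2 * b (Suc j) / 3 ^ Suc j) / 3"
    by (subst suminf_divide[symmetric]) (use cs_summable[OF bnd01_shift[OF assms, of 1]] in \<open>auto simp: mult.commute\<close>)
  finally show ?thesis unfolding cs_def by simp
qed

lemma cs_diff: "bnd01 b \<Longrightarrow> bnd01 b' \<Longrightarrow> (\<forall>i<j. b i = b' i) \<Longrightarrow>
   cs b' - cs b = (cs (\<lambda>i. b' (i + j)) - cs (\<lambda>i. b (i + j))) / 3 ^ j"
proof (induction j arbitrary: b b')
  case 0 then show ?case by simp
next
  case (Suc j)
  have "cs b' - cs b = (cs (\<lambda>i. b' (Suc i)) - cs (\<lambda>i. b (Suc i))) / 3"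
    using cs_head[OF Suc.prems(1)] cs_head[OF Suc.prems(2)] Suc.prems(3) by auto
  also have "cs (\<lambda>i. b' (Suc i)) - cs (\<lambda>i. b (Suc i)) =
     (cs (\<lambda>i. b' (Suc (i + j))) - cs (\<lambda>i. b (Suc (i + j)))) / 3 ^ j"
    using Suc.IH[of "\<lambda>i. b (Suc i)" "\<lambda>i. b' (Suc i)"] Suc.prems by (auto simp: bnd01_def)
  finally show ?case by (simp add: field_simps)
qed

lemma cs_shift_int: assumes "bnd01 b" "\<forall>j. b j \<in> \<int>"
  shows "\<exists>N::int. 3 ^ n * cs b = N + cs (\<lambda>j. b (j + n))"
proof (induction n)
  case 0 then show ?case by (intro exI[of _ 0]) simp
next
  case (Suc n)
  then obtain N::int where N: "3 ^ n * cs b = N + cs (\<lambda>j. b (j + n))" by blast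
  obtain m where m: "b n = of_int m" using assms(2) by (meson Ints_cases)
  have "cs (\<lambda>j. b (j + n)) = 2 * b n / 3 + cs (\<lambda>j. b (j + Suc n)) / 3"
    using cs_head[OF bnd01_shift[OF assms(1)]] by simp
  then have "3 ^ Suc n * cs b = of_int (3 * N + 2 * m) + cs (\<lambda>j. b (j + Suc n))"
    using N m by (simp add: algebra_simps)
  then show ?case by blast
qed

definition Fl :: "nat \<Rightarrow> real \<Rightarrow> int" where "Fl j u = \<lfloor>2 ^ j * u\<rfloor>"
definition dig :: "real \<Rightarrow> nat \<Rightarrow> real" where "dig u j = of_int (Fl (Suc j) u - 2 * Fl j u)"
definition Cf :: "real \<Rightarrow> real" where "Cf u = cs (dig u)"

lemma Fl_step: "Fl (Suc j) u = 2 * Fl j u \<or> Fl (Suc j) u = 2 * Fl j u + 1"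
proof -
  let ?x = "2 ^ j * u"
  have e: "2 ^ Suc j * u = 2 * ?x" by simp
  have a: "2 * \<lfloor>?x\<rfloor> \<le> \<lfloor>2 * ?x\<rfloor>"
    by (metis floor_le_iff of_int_floor_le mult_left_mono le_floor_iff floor_mono of_int_mult of_int_numeral zero_le_numeral)
  have b: "\<lfloor>2 * ?x\<rfloor> \<le> 2 * \<lfloor>?x\<rfloor> + 1"
  proof -
    have "?x < \<lfloor>?x\<rfloor> + 1" by linarith
    then have "real_of_int \<lfloor>2 * ?x\<rfloor> < real_of_int (2 * \<lfloor>?x\<rfloor> + 2)"
      using of_int_floor_le[of "2 * ?x"] by simp linarith
    then have "\<lfloor>2 * ?x\<rfloor> < 2 * \<lfloor>?x\<rfloor> + 2" by (simp only: of_int_less_iff)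
    then show ?thesis by linarith
  qed
  show ?thesis using a b unfolding Fl_def e by linarith
qed

lemma dig01: "dig u j = 0 \<or> dig u j = 1"
  using Fl_step[of j u] unfolding dig_def by auto

lemma bnd_dig: "bnd01 (dig u)"
  using dig01 unfolding bnd01_def by (metis order.refl zero_le_one)

lemma dig_int: "\<forall>j. dig u j \<in> \<int>"
  unfolding dig_def by auto

lemma Cf_cantor: "\<exists>N::int. \<exists>R. 3 ^ n * Cf u = N + R \<and> ((0 \<le> R \<and> R \<le> 1/3) \<or> (2/3 \<le> R \<and> R \<le> 1))"
proof -
  obtain N::int where N: "3 ^ n * Cf u = N + cs (\<lambda>j. dig u (j + n))"
    using cs_shift_int[OF bnd_dig dig_int] unfolding Cf_def by blast
  have h: "cs (\<lambda>j. dig u (j + n)) = 2 * dig u n / 3 + cs (\<lambda>j. dig u (j + Suc n)) / 3"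
    using cs_head[OF bnd01_shift[OF bnd_dig]] by simp
  have "0 \<le> cs (\<lambda>j. dig u (j + Suc n))" "cs (\<lambda>j. dig u (j + Suc n)) \<le> 1"
    using cs_bounds[OF bnd01_shift[OF bnd_dig, of u "Suc n"]] by auto
  then show ?thesis using N h dig01[of u n] by (intro exI[of _ N] exI[of _ "cs (\<lambda>j. dig u (j + n))"]) auto
qed

lemma Fl_mono: "u \<le> v \<Longrightarrow> Fl j u \<le> Fl j v"
  unfolding Fl_def by (intro floor_mono) simp

lemma Cf_strict_mono: assumes "0 \<le> u" "u < v" "v < 1" shows "Cf u < Cf v"
proof -
  obtain n where n: "1 / (v - u) < 2 ^ n" using real_arch_pow[of 2 "1/(v-u)"] by auto
  have "1 < 2 ^ n * (v - u)" using n assms by (simp add: field_simps)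
  then have "Fl n u \<noteq> Fl n v" unfolding Fl_def by (simp add: algebra_simps) linarith
  define j0 where "j0 = (LEAST j. Fl j u \<noteq> Fl j v)"
  have j0: "Fl j0 u \<noteq> Fl j0 v" unfolding j0_def by (rule LeastI) fact
  have lt: "\<And>i. i < j0 \<Longrightarrow> Fl i u = Fl i v" unfolding j0_def using not_less_Least by blast
  have "Fl 0 u = 0" "Fl 0 v = 0" using assms unfolding Fl_def by (simp_all add: floor_eq_iff)
  then have "j0 \<noteq> 0" using j0 by (cases j0) auto
  then obtain j where j: "j0 = Suc j" by (cases j0) auto
  have eqj: "Fl j u = Fl j v" using lt j by auto
  have "Fl (Suc j) u < Fl (Suc j) v" using j0 j Fl_mono[of u v "Suc j"] assms by auto
  then have du: "dig u j = 0" and dv: "dig v j = 1"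
    using Fl_step[of j u] Fl_step[of j v] eqj unfolding dig_def by auto
  have agree: "\<forall>i<j. dig u i = dig v i"
    using lt j unfolding dig_def by auto
  have D: "Cf v - Cf u = (cs (\<lambda>i. dig v (i + j)) - cs (\<lambda>i. dig u (i + j))) / 3 ^ j"
    unfolding Cf_def by (rule cs_diff[OF bnd_dig bnd_dig agree])
  have "cs (\<lambda>i. dig v (i + j)) = 2 / 3 + cs (\<lambda>i. dig v (i + Suc j)) / 3"
    using cs_head[OF bnd01_shift[OF bnd_dig, of v j]] dv by simp
  moreover have "cs (\<lambda>i. dig u (i + j)) = cs (\<lambda>i. dig u (i + Suc j)) / 3"
    using cs_head[OF bnd01_shift[OF bnd_dig, of u j]] du by simp
  moreover have "0 \<le> cs (\<lambda>i. dig v (i + Suc j))" "cs (\<lambda>i. dig u (i + Suc j)) \<le> 1"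
    using cs_bounds[OF bnd01_shift[OF bnd_dig, of v "Suc j"]] cs_bounds[OF bnd01_shift[OF bnd_dig, of u "Suc j"]] by auto
  ultimately have "cs (\<lambda>i. dig v (i + j)) - cs (\<lambda>i. dig u (i + j)) > 0" by linarith
  then have "Cf v - Cf u > 0" unfolding D by simp
  then show ?thesis by simp
qed

lemma Cf_inj: "inj_on Cf {0<..<1}"
proof (rule inj_onI)
  fix u v assume "u \<in> {0<..<1}" "v \<in> {0<..<1}" "Cf u = Cf v"
  then show "u = v" using Cf_strict_mono[of u v] Cf_strict_mono[of v u]
    by (cases u v rule: linorder_cases) auto
qed

lemma Cf_measurable[measurable]: "Cf \<in> borel_measurable borel"
  unfolding Cf_def cs_def dig_def Fl_def by measurable

definition M :: "real measure" where "M = density lborel (\<lambda>x. ennreal (indicator {0<..<1} x))"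

lemma sets_M[simp, measurable_cong]: "sets M = sets borel"
  by (simp add: M_def)
lemma space_M[simp]: "space M = UNIV" by (simp add: M_def)
lemma measurable_M1[simp]: "measurable M N = measurable borel N"
  by (rule measurable_cong_sets) auto
lemma measurable_M2[simp]: "measurable N M = measurable N borel"
  by (rule measurable_cong_sets) auto

lemma emeasure_M: assumes "A \<in> sets borel" shows "emeasure M A = emeasure lborel (A \<inter> {0<..<1})"
proof -
  have "emeasure M A = (\<integral>\<^sup>+x. indicator {0<..<1} x * indicator A x \<partial>lborel)"
    unfolding M_def using assms by (subst emeasure_density) (auto intro!: nn_integral_cong simp: indicator_def)
  also have "\<dots> = (\<integral>\<^sup>+x. indicator (A \<inter> {0<..<1}) x \<partial>lborel)"
    by (intro nn_integral_cong) (auto simp: indicator_def)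
  also have "\<dots> = emeasure lborel (A \<inter> {0<..<1})"
    using assms by (intro nn_integral_indicator) auto
  finally show ?thesis .
qed

lemma emeasure_M_UNIV: "emeasure M UNIV = 1"
  using emeasure_M[of UNIV] by simp

interpretation Mfin: finite_measure M
  by (rule finite_measureI) (simp add: emeasure_M_UNIV)

lemma measure_M_UNIV: "measure M UNIV = 1"
  using emeasure_M_UNIV by (simp add: measure_def)

lemma AE_M: "AE x in M. x \<in> {0<..<1}"
  unfolding M_def by (subst AE_density) (auto simp: indicator_def)

lemma intM: fixes f :: "real \<Rightarrow> real" assumes "f \<in> borel_measurable borel" "\<And>x. \<bar>f x\<bar> \<le> B" shows "integrable M f"
  by (rule Mfin.integrable_const_bound[where B=B]) (use assms in auto)

lemma integral_M_eq: fixes f :: "real \<Rightarrow> real" assumes f: "f \<in> borel_measurable borel" "\<And>x. \<bar>f x\<bar> \<le> B"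
  shows "integral {0<..<1} f = (\<integral>x. f x \<partial>M)"
proof -
  have i: "integrable M f" by (rule intM[OF assms])
  have eq: "(\<integral>x. f x \<partial>M) = (\<integral>x. indicator {0<..<1} x *\<^sub>R f x \<partial>lborel)"
    unfolding M_def by (rule integral_density) (use f in auto)
  have "integrable lborel (\<lambda>x. indicator {0<..<1} x *\<^sub>R f x)"
    using i unfolding M_def by (subst (asm) integrable_density) (use f in auto)
  then have si: "set_integrable lborel {0<..<1} f" unfolding set_integrable_def .
  show ?thesis using set_borel_integral_eq_integral(2)[OF si] eq
    unfolding set_lebesgue_integral_def by simp
qed

lemma AE_M_pair: "AE p in M \<Otimes>\<^sub>M M. fst p \<in> {0<..<1} \<and> snd p \<in> {0<..<1} \<and> fst p \<noteq> snd p"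
proof -
  interpret MM: pair_sigma_finite M M by unfold_locales
  show ?thesis
  proof (rule MM.AE_pair_measure)
    show "{x \<in> space (M \<Otimes>\<^sub>M M). fst x \<in> {0<..<1} \<and> snd x \<in> {0<..<1} \<and> fst x \<noteq> snd x} \<in> sets (M \<Otimes>\<^sub>M M)"
      by measurable
    have ne: "AE y in M. y \<noteq> x" for x
      unfolding M_def by (subst AE_density) (auto intro: AE_mp[OF AE_lborel_singleton[of x]])
    show "AE x in M. AE y in M. fst (x, y) \<in> {0<..<1} \<and> snd (x, y) \<in> {0<..<1} \<and> fst (x, y) \<noteq> snd (x, y)"
    proof (rule AE_mp[OF AE_M], rule AE_I2, rule impI)
      fix x :: real assume x: "x \<in> {0<..<1}"
      show "AE y in M. fst (x, y) \<in> {0<..<1} \<and> snd (x, y) \<in> {0<..<1} \<and> fst (x, y) \<noteq> snd (x, y)"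
        using AE_M ne[of x] by eventually_elim (use x in auto)
    qed
  qed
qed

lemma cos_int_FTC:
  fixes s T :: real assumes "s \<noteq> 0" "0 \<le> T"
  shows "(\<integral>t. indicator {0..T} t * cos (2*pi*t * s) \<partial>lborel) = sin (2*pi*T * s) / (2*pi * s)"
proof -
  have "(\<integral>t. indicator {0..T} t *\<^sub>R cos (2*pi*t * s) \<partial>lborel) = sin (2*pi*T * s) / (2*pi * s) - sin (2*pi*0 * s) / (2*pi * s)"
  proof (rule integral_FTC_atLeastAtMost)
    fix x :: real
    have "((\<lambda>t. sin (2*pi*t * s) / (2*pi * s)) has_real_derivative (cos (2*pi*x * s))) (at x within {0..T})"
      apply (rule derivative_eq_intros refl)+
      using assms apply (simp_all add: field_simps)
      done
    then show "((\<lambda>t. sin (2*pi*t * s) / (2*pi * s)) has_vector_derivative cos (2*pi*x * s)) (at x within {0..T})"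
      unfolding has_real_derivative_iff_has_vector_derivative .
    show "continuous_on {0..T} (\<lambda>t. cos (2*pi*t * s))" by (intro continuous_intros)
  qed (use assms in simp)
  then show ?thesis by simp
qed

lemma cos_int_bound:
  fixes s T :: real assumes "s \<noteq> 0" "0 < T"
  shows "\<bar>(\<integral>t. indicator {0..T} t * cos (2*pi*t* s) \<partial>lborel) / T\<bar> \<le> 1"
    and "\<bar>(\<integral>t. indicator {0..T} t * cos (2*pi*t* s) \<partial>lborel) / T\<bar> \<le> 1 / (2*pi*\<bar>s\<bar>*T)"
proof -
  have e: "(\<integral>t. indicator {0..T} t * cos (2*pi*t* s) \<partial>lborel) / T = sin (2*pi*T* s) / (2*pi* s*T)"
    using cos_int_FTC[OF assms(1)] assms(2) by simp
  have "\<bar>sin (2*pi*T* s)\<bar> \<le> \<bar>2*pi*T* s\<bar>" by (rule abs_sin_x_le_abs_x)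
  moreover have "\<bar>2*pi* s*T\<bar> > 0" using assms by simp
  ultimately show "\<bar>(\<integral>t. indicator {0..T} t * cos (2*pi*t* s) \<partial>lborel) / T\<bar> \<le> 1"
    unfolding e by (simp add: abs_mult divide_le_eq_1 mult_ac)
  have "\<bar>sin (2*pi*T* s)\<bar> \<le> 1" by simp
  then show "\<bar>(\<integral>t. indicator {0..T} t * cos (2*pi*t* s) \<partial>lborel) / T\<bar> \<le> 1 / (2*pi*\<bar>s\<bar>*T)"
    unfolding e using assms by (simp add: abs_mult divide_right_mono mult_ac)
qed

lemma wiener:
  fixes g :: "real \<Rightarrow> real"
  assumes gm[measurable]: "g \<in> borel_measurable borel" and inj: "inj_on g {0<..<1}"
  shows "((\<lambda>T. (\<integral>t. indicator {0..T} t * ((\<integral>u. cos (2*pi*t*g u) \<partial>M)^2 + (\<integral>u. sin (2*pi*t*g u) \<partial>M)^2) \<partial>lborel) / T) \<longlongrightarrow> 0) at_top"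
proof -
  define N where "N = M \<Otimes>\<^sub>M M"
  interpret MM: pair_sigma_finite M M by unfold_locales
  interpret Nf: finite_measure N unfolding N_def
    by (intro finite_measure_pair_measure Mfin.finite_measure_axioms)
  interpret LN: pair_sigma_finite lborel N by unfold_locales
  define s where "s p = g (fst p) - g (snd p)" for p
  have s_meas[measurable]: "s \<in> borel_measurable N" unfolding s_def N_def by measurable
  have sq: "(\<integral>u. cos (2*pi*t*g u) \<partial>M)^2 + (\<integral>u. sin (2*pi*t*g u) \<partial>M)^2 = (\<integral>p. cos (2*pi*t* s p) \<partial>N)" for t
  proof -
    define a where "a u = 2*pi*t*g u" for u
    have am[measurable]: "a \<in> borel_measurable borel" unfolding a_def by measurable
    define C where "C = (\<integral>u. cos (a u) \<partial>M)"
    define S where "S = (\<integral>u. sin (a u) \<partial>M)"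
    have ic: "integrable M (\<lambda>u. cos (a u) * c)" for c by (rule intM[where B="\<bar>c\<bar>"]) (auto simp: abs_mult mult_left_le_one_le)
    have is': "integrable M (\<lambda>u. sin (a u) * c)" for c by (rule intM[where B="\<bar>c\<bar>"]) (auto simp: abs_mult mult_left_le_one_le)
    have "C^2 + S^2 = (\<integral>u. cos (a u) * C \<partial>M) + (\<integral>u. sin (a u) * S \<partial>M)"
      by (simp add: C_def S_def power2_eq_square)
    also have "\<dots> = (\<integral>u. cos (a u) * C + sin (a u) * S \<partial>M)"
      by (rule Bochner_Integration.integral_add[symmetric]) (use ic is' in auto)
    also have "\<dots> = (\<integral>u. (\<integral>v. cos (a u - a v) \<partial>M) \<partial>M)"
    proof (rule Bochner_Integration.integral_cong[OF refl])
      fix u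
      have "(\<integral>v. cos (a u - a v) \<partial>M) = (\<integral>v. cos (a v) * cos (a u) + sin (a v) * sin (a u) \<partial>M)"
        by (simp add: cos_diff mult_ac)
      also have "\<dots> = (\<integral>v. cos (a v) * cos (a u) \<partial>M) + (\<integral>v. sin (a v) * sin (a u) \<partial>M)"
        by (rule Bochner_Integration.integral_add) (use ic is' in auto)
      also have "\<dots> = cos (a u) * C + sin (a u) * S" by (simp add: C_def S_def mult_ac)
      finally show "cos (a u) * C + sin (a u) * S = (\<integral>v. cos (a u - a v) \<partial>M)" by simp
    qed
    also have "\<dots> = (\<integral>p. (\<lambda>(u,v). cos (a u - a v)) p \<partial>N)"
      unfolding N_def
    proof (rule MM.integral_fst)
      show "integrable (M \<Otimes>\<^sub>M M) (\<lambda>(u,v). cos (a u - a v))"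
        by (rule Nf.integrable_const_bound[unfolded N_def, where B=1]) auto
    qed
    also have "\<dots> = (\<integral>p. cos (2*pi*t* s p) \<partial>N)"
      by (rule Bochner_Integration.integral_cong) (auto simp: a_def s_def algebra_simps)
    finally show ?thesis by (simp add: C_def S_def a_def)
  qed
  define K where "K T p = (\<integral>t. indicator {0..T} t * cos (2*pi*t* s p) \<partial>lborel) / T" for T p
  have fub: "(\<integral>t. indicator {0..T} t * ((\<integral>u. cos (2*pi*t*g u) \<partial>M)^2 + (\<integral>u. sin (2*pi*t*g u) \<partial>M)^2) \<partial>lborel) / T
     = (\<integral>p. K T p \<partial>N)" if T: "0 \<le> T" for T
  proof -
    have "(\<integral>t. indicator {0..T} t * ((\<integral>u. cos (2*pi*t*g u) \<partial>M)^2 + (\<integral>u. sin (2*pi*t*g u) \<partial>M)^2) \<partial>lborel)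
      = (\<integral>t. (\<integral>p. indicator {0..T} t * cos (2*pi*t* s p) \<partial>N) \<partial>lborel)"
      by (simp add: sq)
    also have "\<dots> = (\<integral>p. (\<integral>t. indicator {0..T} t * cos (2*pi*t* s p) \<partial>lborel) \<partial>N)"
    proof (rule LN.Fubini_integral[symmetric])
      have w: "integrable (lborel \<Otimes>\<^sub>M N) (indicator ({0..T} \<times> UNIV) :: _ \<Rightarrow> real)"
      proof (subst integrable_indicator_iff, intro conjI)
        show "{0..T} \<times> UNIV \<inter> space (lborel \<Otimes>\<^sub>M N) \<in> sets (lborel \<Otimes>\<^sub>M N)"
          proof -
          have "{0..T} \<times> space N \<in> sets (lborel \<Otimes>\<^sub>M N)" by (intro pair_measureI) auto
          then show ?thesis by (simp add: space_pair_measure N_def)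
        qed
        have "emeasure (lborel \<Otimes>\<^sub>M N) ({0..T} \<times> space N) = emeasure lborel {0..T} * emeasure N (space N)"
          by (rule Nf.emeasure_pair_measure_Times) auto
        moreover have "emeasure N (space N) < top" by (rule Nf.emeasure_finite[THEN top.not_eq_extremum[THEN iffD1]])
        ultimately show "emeasure (lborel \<Otimes>\<^sub>M N) ({0..T} \<times> UNIV \<inter> space (lborel \<Otimes>\<^sub>M N)) < \<infinity>"
          by (simp add: space_pair_measure N_def ennreal_mult_less_top emeasure_lborel_Icc_eq)
      qed
      show "integrable (lborel \<Otimes>\<^sub>M N) (\<lambda>(t, p). indicator {0..T} t * cos (2*pi*t* s p))"
        proof (rule Bochner_Integration.integrable_bound[OF w])
        show "(\<lambda>(t, p). indicator {0..T} t * cos (2*pi*t * s p)) \<in> borel_measurable (lborel \<Otimes>\<^sub>M N)"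
          by measurable
        show "AE x in lborel \<Otimes>\<^sub>M N. norm ((\<lambda>(t, p). indicator {0..T} t * cos (2*pi*t * s p)) x) \<le> norm (indicator ({0..T} \<times> UNIV) x :: real)"
          by (intro AE_I2) (auto simp: indicator_def abs_mult)
      qed
    qed
    finally show ?thesis unfolding K_def by simp
  qed
  have AEs: "AE p in N. s p \<noteq> 0"
    using AE_M_pair unfolding N_def
  proof (rule AE_mp, intro AE_I2 impI)
    fix p :: "real \<times> real" assume "fst p \<in> {0<..<1} \<and> snd p \<in> {0<..<1} \<and> fst p \<noteq> snd p"
    then show "s p \<noteq> 0" using inj unfolding s_def inj_on_def by auto
  qed
  have lim: "((\<lambda>T. \<integral>p. K T p \<partial>N) \<longlongrightarrow> (\<integral>p. 0 \<partial>N)) at_top"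
  proof (rule integral_dominated_convergence_at_top[where w="\<lambda>_. 1"])
    show "(\<lambda>p. 0::real) \<in> borel_measurable N" by simp
    show "K T \<in> borel_measurable N" for T unfolding K_def by measurable
    show "integrable N (\<lambda>_. 1::real)" by simp
    show "AE p in N. ((\<lambda>T. K T p) \<longlongrightarrow> 0) at_top"
      using AEs
    proof (rule AE_mp, intro AE_I2 impI)
      fix p assume sp: "s p \<noteq> 0"
      show "((\<lambda>T. K T p) \<longlongrightarrow> 0) at_top"
      proof (rule Lim_null_comparison[where g="\<lambda>T. 1 / (2*pi*\<bar>s p\<bar>*T)"])
        show "\<forall>\<^sub>F T in at_top. norm (K T p) \<le> 1 / (2*pi*\<bar>s p\<bar>*T)"
          using eventually_gt_at_top[of 0] by eventually_elim (use cos_int_bound(2)[OF sp] in \<open>auto simp: K_def\<close>)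
        have "((\<lambda>T. (1 / (2*pi*\<bar>s p\<bar>)) * inverse T) \<longlongrightarrow> (1 / (2*pi*\<bar>s p\<bar>)) * 0) at_top"
          by (intro tendsto_intros tendsto_inverse_0_at_top filterlim_ident)
        then show "((\<lambda>T. 1 / (2*pi*\<bar>s p\<bar>*T)) \<longlongrightarrow> 0) at_top"
          by (simp add: field_simps)
      qed
    qed
    show "\<forall>\<^sub>F T in at_top. AE p in N. norm (K T p) \<le> 1"
      using eventually_gt_at_top[of 0]
    proof eventually_elim
      case (elim T)
      show ?case using AEs by (rule AE_mp) (use cos_int_bound(1)[OF _ elim] in \<open>auto simp: K_def\<close>)
    qed
  qed
  show ?thesis
  proof (rule Lim_transform_eventually[OF lim[simplified]])
    show "\<forall>\<^sub>F T in at_top. (\<integral>p. K T p \<partial>N) = (\<integral>t. indicator {0..T} t * ((\<integral>u. cos (2*pi*t*g u) \<partial>M)^2 + (\<integral>u. sin (2*pi*t*g u) \<partial>M)^2) \<partial>lborel) / T"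
      using eventually_ge_at_top[of 0] by eventually_elim (simp add: fub)
  qed
qed

lemma find_interval:
  fixes S :: "nat \<Rightarrow> real"
  assumes mono: "\<And>m. S m < S (Suc m)" and unb: "\<And>m. real m \<le> S m" and t: "S 0 \<le> t"
  shows "\<exists>m. S m \<le> t \<and> t < S (Suc m)"
proof (rule ccontr)
  assume "\<not> ?thesis"
  then have all: "S m \<le> t" for m
    by (induction m) (use t in \<open>auto simp: not_less\<close>)
  obtain m :: nat where "t < real m" using reals_Archimedean2 by blast
  with all[of m] unb[of m] show False by linarith
qed

lemma S_strict: fixes S :: "nat \<Rightarrow> real" assumes "\<And>m. S m < S (Suc m)" shows "m < n \<Longrightarrow> S m < S n"
  using assms by (rule lift_Suc_mono_less)

lemma S_mono: fixes S :: "nat \<Rightarrow> real" assumes "\<And>m. S m < S (Suc m)" and mn: "m \<le> n" shows "S m \<le> S n"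
proof (cases "m = n")
  case False
  with mn have "m < n" by simp
  then show ?thesis using S_strict[of S, OF assms(1)] by (meson less_imp_le)
qed simp

lemma markov_part:
  fixes h :: "real \<Rightarrow> real"
  assumes hm[measurable]: "h \<in> borel_measurable borel" and h0: "\<And>t. 0 \<le> h t" and h1: "\<And>t. h t \<le> 1"
    and c: "0 < c" and T: "0 \<le> T"
  shows "measure lborel {t \<in> {0..T}. c \<le> h t} \<le> (\<integral>t. indicator {0..T} t * h t \<partial>lborel) / c"
proof -
  have int: "integrable lborel (\<lambda>t. indicator {0..T} t * h t)"
  proof (rule Bochner_Integration.integrable_bound[where f="indicator {0..T} :: real \<Rightarrow> real"])
    show "integrable lborel (indicator {0..T} :: real \<Rightarrow> real)"
      by (subst integrable_indicator_iff) (auto simp: emeasure_lborel_Icc_eq)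
    show "AE x in lborel. norm (indicator {0..T} x * h x) \<le> norm (indicator {0..T} x :: real)"
      using h0 h1 by (intro AE_I2) (auto simp: indicator_def)
  qed simp
  have "measure lborel {x \<in> space lborel. c \<le> indicator {0..T} x * h x} \<le> (\<integral>t. indicator {0..T} t * h t \<partial>lborel) / c"
    by (rule integral_Markov_inequality_measure[OF int, where A=UNIV]) (use c h0 in auto)
  moreover have "{x \<in> space lborel. c \<le> indicator {0..T} x * h x} = {t \<in> {0..T}. c \<le> h t}"
    using c by (auto simp: indicator_def)
  ultimately show ?thesis by simp
qed

lemma density_set:
  fixes h :: "nat \<Rightarrow> real \<Rightarrow> real"
  assumes hm[measurable]: "\<And>n. h n \<in> borel_measurable borel"
    and h0: "\<And>n t. 0 \<le> h n t" and h1: "\<And>n t. h n t \<le> 1"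
    and avg: "\<And>n. ((\<lambda>T. (\<integral>t. indicator {0..T} t * h n t \<partial>lborel) / T) \<longlongrightarrow> 0) at_top"
  shows "\<exists>A. A \<subseteq> {0..} \<and> A \<in> sets lebesgue \<and>
           ((\<lambda>T. measure lebesgue (A \<inter> {0..T}) / T) \<longlongrightarrow> 1) at_top \<and>
           (\<forall>n. (h n \<longlongrightarrow> 0) (inf at_top (principal A)))"
proof -
  define B where "B m = {t. 0 \<le> t \<and> (\<exists>n\<le>m. 1 / (real m + 1) \<le> h n t)}" for m
  have Bm[measurable]: "B m \<in> sets borel" for m
  proof -
    have "B m = {0..} \<inter> (\<Union>n\<le>m. {t. 1 / (real m + 1) \<le> h n t})" unfolding B_def by auto
    also have "\<dots> \<in> sets borel" by measurable
    finally show ?thesis .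
  qed
  have Bmono: "m \<le> m' \<Longrightarrow> B m \<subseteq> B m'" for m m'
  proof
    fix t assume "m \<le> m'" "t \<in> B m"
    then obtain n where "n \<le> m" "1 / (real m + 1) \<le> h n t" "0 \<le> t" unfolding B_def by auto
    moreover have "1 / (real m' + 1) \<le> 1 / (real m + 1)" using \<open>m \<le> m'\<close> by (simp add: frac_le)
    ultimately have "n \<le> m'" "1 / (real m' + 1) \<le> h n t" "0 \<le> t" using \<open>m \<le> m'\<close> by auto
    then show "t \<in> B m'" unfolding B_def by blast
  qed
  have fin: "{0..T} \<in> fmeasurable lborel" for T :: real
    by (auto simp: fmeasurable_def emeasure_lborel_Icc_eq)
  have Bdens: "\<exists>T0. \<forall>T\<ge>T0. measure lborel (B m \<inter> {0..T}) \<le> T / (real m + 1)" for m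
  proof -
    define c where "c = 1 / (real m + 1)"
    have c: "0 < c" unfolding c_def by simp
    have bound: "measure lborel (B m \<inter> {0..T}) \<le> (\<Sum>n\<le>m. (\<integral>t. indicator {0..T} t * h n t \<partial>lborel) / c)"
      if T: "0 \<le> T" for T
    proof -
      have "B m \<inter> {0..T} = (\<Union>n\<le>m. {t \<in> {0..T}. c \<le> h n t})" unfolding B_def c_def by auto
      then have "measure lborel (B m \<inter> {0..T}) \<le> (\<Sum>n\<le>m. measure lborel {t \<in> {0..T}. c \<le> h n t})"
        by (simp only:) (rule measure_UNION_le, auto)
      also have "\<dots> \<le> (\<Sum>n\<le>m. (\<integral>t. indicator {0..T} t * h n t \<partial>lborel) / c)"
        by (intro sum_mono markov_part[OF hm h0 h1 c T])
      finally show ?thesis .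
    qed
    have lim: "((\<lambda>T. (\<Sum>n\<le>m. (\<integral>t. indicator {0..T} t * h n t \<partial>lborel) / T) / c) \<longlongrightarrow> (\<Sum>n\<le>m. 0) / c) at_top"
      using c by (intro tendsto_intros avg) auto
    have "\<forall>\<^sub>F T in at_top. (\<Sum>n\<le>m. (\<integral>t. indicator {0..T} t * h n t \<partial>lborel) / T) / c < c"
      using order_tendstoD(2)[OF lim, of c] c by simp
    moreover have "\<forall>\<^sub>F T in at_top. (0::real) < T" by (rule eventually_gt_at_top)
    ultimately have "\<forall>\<^sub>F T in at_top. measure lborel (B m \<inter> {0..T}) \<le> T / (real m + 1)"
    proof eventually_elim
      case (elim T)
      have "measure lborel (B m \<inter> {0..T}) \<le> (\<Sum>n\<le>m. (\<integral>t. indicator {0..T} t * h n t \<partial>lborel) / c)"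
        using bound elim by simp
      also have "\<dots> = T * ((\<Sum>n\<le>m. (\<integral>t. indicator {0..T} t * h n t \<partial>lborel) / T) / c)"
        using elim by (simp add: sum_divide_distrib[symmetric])
      also have "\<dots> \<le> T * c" using elim by (intro mult_left_mono) auto
      finally show ?case unfolding c_def by simp
    qed
    then show ?thesis by (simp add: eventually_at_top_linorder)
  qed
  then obtain T' where T': "\<And>m T. T \<ge> T' m \<Longrightarrow> measure lborel (B m \<inter> {0..T}) \<le> T / (real m + 1)"
    by metis
  define S where "S = rec_nat (max 1 (T' 0)) (\<lambda>m x. max (x + 1) (T' (Suc m)))"
  have S0: "S 0 = max 1 (T' 0)" and SS: "S (Suc m) = max (S m + 1) (T' (Suc m))" for m
    by (simp_all add: S_def)
  have Smono: "S m < S (Suc m)" for m using SS[of m] by simp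
  have SgeT: "T' m \<le> S m" for m by (cases m) (simp_all add: S0 SS)
  have Sge: "real m \<le> S m" for m by (induction m) (simp_all add: S0 SS)
  define A where "A = {t. 0 \<le> t \<and> (\<forall>m. S m \<le> t \<and> t < S (Suc m) \<longrightarrow> t \<notin> B m)}"
  have Aeq: "A = {0..} - (\<Union>m. {S m..<S (Suc m)} \<inter> B m)" unfolding A_def by auto
  have Am: "A \<in> sets borel" unfolding Aeq by measurable
  have Asub: "A \<subseteq> {0..}" unfolding A_def by auto
  have Aleb: "A \<in> sets lebesgue" using Am by (simp add: sets_completionI_sets)
  have conv: "(h n \<longlongrightarrow> 0) (inf at_top (principal A))" for n
  proof (rule tendstoI)
    fix e :: real assume e: "0 < e"
    obtain m0 :: nat where m0: "1 / e < real m0" "n \<le> m0"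
      using reals_Archimedean2[of "1/e"] by (metis le_cases of_nat_le_iff order.strict_trans2)
    have m0e: "1 / (real m0 + 1) < e" using m0 e by (simp add: field_simps) 
    show "\<forall>\<^sub>F t in inf at_top (principal A). dist (h n t) 0 < e"
      unfolding eventually_inf_principal
      using eventually_ge_at_top[of "S m0"]
    proof eventually_elim
      case (elim t)
      show ?case
      proof
        assume tA: "t \<in> A"
        have "S 0 \<le> t" using S_mono[of S, OF Smono, of 0 m0] elim by simp
        then obtain m where m: "S m \<le> t" "t < S (Suc m)" using find_interval[of S, OF Smono Sge] by blast
        have "m0 \<le> m"
        proof (rule ccontr)
          assume "\<not> m0 \<le> m"
          then have "Suc m \<le> m0" by simp
          then have "S (Suc m) \<le> S m0" by (rule S_mono[of S, OF Smono])
          then show False using m elim by simp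
        qed
        have "t \<notin> B m" using tA m unfolding A_def by auto
        moreover have "0 \<le> t" "n \<le> m" using tA \<open>m0 \<le> m\<close> m0 unfolding A_def by auto
        ultimately have "\<not> (1 / (real m + 1) \<le> h n t)" unfolding B_def by blast
        then have "h n t < 1 / (real m + 1)" by simp
        also have "1 / (real m + 1) \<le> 1 / (real m0 + 1)" using \<open>m0 \<le> m\<close> by (simp add: frac_le)
        finally show "dist (h n t) 0 < e" using m0e h0[of n t] by simp
      qed
    qed
  qed
  have meas_eq: "measure lebesgue (A \<inter> {0..T}) = measure lborel (A \<inter> {0..T})" for T
    using Am by (simp add: measure_completion)
  have dens: "((\<lambda>T. measure lebesgue (A \<inter> {0..T}) / T) \<longlongrightarrow> 1) at_top"
  proof (rule tendstoI)
    fix e :: real assume e: "0 < e"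
    obtain K :: nat where K: "1 / e < real K" using reals_Archimedean2 by blast
    have Ke: "1 / (real K + 1) < e" using K e by (simp add: field_simps)
    show "\<forall>\<^sub>F T in at_top. dist (measure lebesgue (A \<inter> {0..T}) / T) 1 < e"
      using eventually_ge_at_top[of "S K"]
    proof eventually_elim
      case (elim T)
      have T0: "0 < T" using Sge[of K] S_mono[of S, OF Smono, of 0 K] S0 elim by simp
      have "S 0 \<le> T" using S_mono[of S, OF Smono, of 0 K] elim by simp
      then obtain m where m: "S m \<le> T" "T < S (Suc m)" using find_interval[of S, OF Smono Sge] by blast
      have "K \<le> m"
      proof (rule ccontr)
        assume "\<not> K \<le> m"
        then have "Suc m \<le> K" by simp
        then have "S (Suc m) \<le> S K" by (rule S_mono[of S, OF Smono])
        then show False using m elim by simp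
      qed
      have sub: "{0..T} - A \<subseteq> B m \<inter> {0..T}"
      proof
        fix t assume t: "t \<in> {0..T} - A"
        then obtain m' where m': "S m' \<le> t" "t < S (Suc m')" "t \<in> B m'" unfolding A_def by auto
        have "m' \<le> m"
        proof (rule ccontr)
          assume "\<not> m' \<le> m"
          then have "Suc m \<le> m'" by simp
          then have "S (Suc m) \<le> S m'" by (rule S_mono[of S, OF Smono])
          then show False using m m' t by simp
        qed
        then show "t \<in> B m \<inter> {0..T}" using Bmono m' t by auto
      qed
      have "measure lborel ({0..T} - A) \<le> measure lborel (B m \<inter> {0..T})"
      proof (rule measure_mono_fmeasurable[OF sub])
        show "{0..T} - A \<in> sets lborel" using Am by auto
        have "{0..T} \<inter> B m \<in> fmeasurable lborel" using fmeasurable_Int_fmeasurable[OF fin[of T], of "B m"] Bm by simp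
        then show "B m \<inter> {0..T} \<in> fmeasurable lborel" by (simp add: Int_commute)
      qed
      also have "\<dots> \<le> T / (real m + 1)" using T'[of m T] SgeT[of m] m by simp
      also have "\<dots> \<le> T / (real K + 1)" using \<open>K \<le> m\<close> T0 by (simp add: frac_le)
      finally have c1: "measure lborel ({0..T} - A) \<le> T / (real K + 1)" .
      have "measure lborel ({0..T} - (A \<inter> {0..T})) = measure lborel {0..T} - measure lborel (A \<inter> {0..T})"
        by (rule measure_Diff) (use Am in \<open>auto simp: emeasure_lborel_Icc_eq\<close>)
      moreover have "{0..T} - (A \<inter> {0..T}) = {0..T} - A" by auto
      ultimately have c2: "measure lborel (A \<inter> {0..T}) = T - measure lborel ({0..T} - A)" using T0 by simp
      have c3: "measure lborel (A \<inter> {0..T}) \<le> T"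
        using measure_mono_fmeasurable[of "A \<inter> {0..T}" "{0..T}" lborel] fin Am T0 by auto
      have "measure lborel (A \<inter> {0..T}) / T \<le> 1" using c3 T0 by simp
      moreover have "1 - 1 / (real K + 1) \<le> measure lborel (A \<inter> {0..T}) / T"
      proof -
        have c4: "T - T / (real K + 1) \<le> measure lborel (A \<inter> {0..T})" using c1 c2 by linarith
        have "(T - T / (real K + 1)) / T \<le> measure lborel (A \<inter> {0..T}) / T"
          using c4 T0 by (simp add: divide_right_mono)
        moreover have "(T - T / (real K + 1)) / T = 1 - 1 / (real K + 1)" using T0 by (simp add: diff_divide_distrib)
        ultimately show ?thesis by simp
      qed
      ultimately show ?case using Ke unfolding meas_eq dist_real_def by linarith
    qed
  qed
  show ?thesis using Asub Aleb dens conv by blast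
qed

definition ch_c :: "int \<Rightarrow> int \<Rightarrow> real^2 \<Rightarrow> real" where
  "ch_c a b x = cos (2*pi*(of_int a * x$1 + of_int b * x$2))"
definition ch_s :: "int \<Rightarrow> int \<Rightarrow> real^2 \<Rightarrow> real" where
  "ch_s a b x = sin (2*pi*(of_int a * x$1 + of_int b * x$2))"

inductive_set Q :: "(real^2 \<Rightarrow> real) set" where
  Qc: "ch_c a b \<in> Q"
| Qs: "ch_s a b \<in> Q"
| Qadd: "f \<in> Q \<Longrightarrow> g \<in> Q \<Longrightarrow> (\<lambda>x. f x + g x) \<in> Q"
| Qscale: "f \<in> Q \<Longrightarrow> (\<lambda>x. c * f x) \<in> Q"

lemma Q_const: "(\<lambda>x. c) \<in> Q"
proof -
  have "(\<lambda>x. c * ch_c 0 0 x) \<in> Q" by (intro Qscale Qc)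
  then show ?thesis by (simp add: ch_c_def)
qed

lemma ch_sum: 
  "ch_c (a+a') (b+b') x = cos (2*pi*(of_int a * x$1 + of_int b * x$2) + 2*pi*(of_int a' * x$1 + of_int b' * x$2))"
  "ch_c (a-a') (b-b') x = cos (2*pi*(of_int a * x$1 + of_int b * x$2) - 2*pi*(of_int a' * x$1 + of_int b' * x$2))"
  "ch_s (a+a') (b+b') x = sin (2*pi*(of_int a * x$1 + of_int b * x$2) + 2*pi*(of_int a' * x$1 + of_int b' * x$2))"
  "ch_s (a-a') (b-b') x = sin (2*pi*(of_int a * x$1 + of_int b * x$2) - 2*pi*(of_int a' * x$1 + of_int b' * x$2))"
  by (simp_all add: ch_c_def ch_s_def algebra_simps)

lemma trig_prod: fixes u v :: real shows
  "cos u * cos v = (1/2) * cos (u + v) + (1/2) * cos (u - v)"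
  "sin u * sin v = (1/2) * cos (u - v) + (-1/2) * cos (u + v)"
  "sin u * cos v = (1/2) * sin (u + v) + (1/2) * sin (u - v)"
  by (simp_all add: cos_add cos_diff sin_add sin_diff field_simps)

lemma prod_cc: "(\<lambda>x. ch_c a b x * ch_c a' b' x) \<in> Q"
proof -
  have "(\<lambda>x. (1/2) * ch_c (a+a') (b+b') x + (1/2) * ch_c (a-a') (b-b') x) \<in> Q" by (intro Qadd Qscale Qc)
  moreover have "(\<lambda>x. (1/2) * ch_c (a+a') (b+b') x + (1/2) * ch_c (a-a') (b-b') x) = (\<lambda>x. ch_c a b x * ch_c a' b' x)"
    unfolding ch_sum by (intro ext) (simp only: ch_c_def trig_prod)
  ultimately show ?thesis by simp
qed

lemma prod_ss: "(\<lambda>x. ch_s a b x * ch_s a' b' x) \<in> Q"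
proof -
  have "(\<lambda>x. (1/2) * ch_c (a-a') (b-b') x + (-1/2) * ch_c (a+a') (b+b') x) \<in> Q" by (intro Qadd Qscale Qc)
  moreover have "(\<lambda>x. (1/2) * ch_c (a-a') (b-b') x + (-1/2) * ch_c (a+a') (b+b') x) = (\<lambda>x. ch_s a b x * ch_s a' b' x)"
    unfolding ch_sum by (intro ext) (simp only: ch_s_def trig_prod)
  ultimately show ?thesis by simp
qed

lemma prod_sc: "(\<lambda>x. ch_s a b x * ch_c a' b' x) \<in> Q"
proof -
  have "(\<lambda>x. (1/2) * ch_s (a+a') (b+b') x + (1/2) * ch_s (a-a') (b-b') x) \<in> Q" by (intro Qadd Qscale Qs)
  moreover have "(\<lambda>x. (1/2) * ch_s (a+a') (b+b') x + (1/2) * ch_s (a-a') (b-b') x) = (\<lambda>x. ch_s a b x * ch_c a' b' x)"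
    unfolding ch_sum by (intro ext) (simp only: ch_s_def ch_c_def trig_prod)
  ultimately show ?thesis by simp
qed

lemma prod_cs: "(\<lambda>x. ch_c a b x * ch_s a' b' x) \<in> Q"
  using prod_sc[of a' b' a b] by (simp add: mult.commute)

lemma Q_mult_base:
  assumes "g \<in> Q"
  shows "(\<lambda>x. ch_c a b x * g x) \<in> Q" "(\<lambda>x. ch_s a b x * g x) \<in> Q"
  using assms
proof (induction g)
  case (Qadd f g)
  { case 1 show ?case using Qadd.IH(1,3) Q.Qadd by (simp add: distrib_left) }
  { case 2 show ?case using Qadd.IH(2,4) Q.Qadd by (simp add: distrib_left) }
next
  case (Qscale f c)
  { case 1 show ?case using Q.Qscale[OF Qscale.IH(1), of c] by (simp add: mult_ac) }
  { case 2 show ?case using Q.Qscale[OF Qscale.IH(2), of c] by (simp add: mult_ac) }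
qed (auto intro: prod_cc prod_ss prod_sc prod_cs)

lemma Q_mult: assumes "f \<in> Q" "g \<in> Q" shows "(\<lambda>x. f x * g x) \<in> Q"
  using assms(1)
proof (induction f)
  case (Qc a b) then show ?case using Q_mult_base(1)[OF assms(2)] by simp
next
  case (Qs a b) then show ?case using Q_mult_base(2)[OF assms(2)] by simp
next
  case (Qadd f1 f2) then show ?case using Q.Qadd by (simp add: distrib_right)
next
  case (Qscale f c) then show ?case using Q.Qscale[OF Qscale.IH, of c] by (simp add: mult_ac)
qed

lemma Q_cont: "f \<in> Q \<Longrightarrow> continuous_on UNIV f"
  by (induction f rule: Q.induct) (auto simp: ch_c_def ch_s_def intro!: continuous_intros)

lemma Q_bounded: "f \<in> Q \<Longrightarrow> \<exists>B. \<forall>x. \<bar>f x\<bar> \<le> B"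
proof (induction f rule: Q.induct)
  case (Qadd f g)
  then obtain B1 B2 where "\<forall>x. \<bar>f x\<bar> \<le> B1" "\<forall>x. \<bar>g x\<bar> \<le> B2" by blast
  then have "\<forall>x. \<bar>f x + g x\<bar> \<le> B1 + B2" by (meson abs_triangle_ineq add_mono order_trans)
  then show ?case by blast
next
  case (Qscale f c)
  then obtain B where "\<forall>x. \<bar>f x\<bar> \<le> B" by blast
  then have "\<forall>x. \<bar>c * f x\<bar> \<le> \<bar>c\<bar> * B" by (simp add: abs_mult mult_left_mono)
  then show ?case by blast
qed (auto simp: ch_c_def ch_s_def intro!: exI[of _ 1])

definition Emb :: "real^2 \<Rightarrow> (real \<times> real) \<times> (real \<times> real)" where
  "Emb x = ((cos (2*pi*x$1), sin (2*pi*x$1)), (cos (2*pi*x$2), sin (2*pi*x$2)))"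

inductive_set Pol :: "((real \<times> real) \<times> (real \<times> real) \<Rightarrow> real) set" where
  Pconst: "(\<lambda>p. c) \<in> Pol"
| P1: "(\<lambda>p. fst (fst p)) \<in> Pol"
| P2: "(\<lambda>p. snd (fst p)) \<in> Pol"
| P3: "(\<lambda>p. fst (snd p)) \<in> Pol"
| P4: "(\<lambda>p. snd (snd p)) \<in> Pol"
| Padd: "f \<in> Pol \<Longrightarrow> g \<in> Pol \<Longrightarrow> (\<lambda>p. f p + g p) \<in> Pol"
| Pmult: "f \<in> Pol \<Longrightarrow> g \<in> Pol \<Longrightarrow> (\<lambda>p. f p * g p) \<in> Pol"

lemma Pol_cont: "f \<in> Pol \<Longrightarrow> continuous_on S f"
  by (induction f rule: Pol.induct) (auto intro!: continuous_intros)

lemma Pol_Q: "f \<in> Pol \<Longrightarrow> (\<lambda>x. f (Emb x)) \<in> Q"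
proof (induction f rule: Pol.induct)
  case (Pconst c) show ?case by (rule Q_const)
next
  case P1 have "ch_c 1 0 \<in> Q" by (rule Qc) then show ?case by (simp add: Emb_def ch_c_def[abs_def])
next
  case P2 have "ch_s 1 0 \<in> Q" by (rule Qs) then show ?case by (simp add: Emb_def ch_s_def[abs_def])
next
  case P3 have "ch_c 0 1 \<in> Q" by (rule Qc) then show ?case by (simp add: Emb_def ch_c_def[abs_def])
next
  case P4 have "ch_s 0 1 \<in> Q" by (rule Qs) then show ?case by (simp add: Emb_def ch_s_def[abs_def])
next
  case (Padd f g) show ?case using Padd.IH by (rule Qadd)
next
  case (Pmult f g) show ?case using Pmult.IH by (rule Q_mult)
qed

lemma cos_sin_eq_int:
  fixes a b :: real
  assumes "cos (2*pi*a) = cos (2*pi*b)" "sin (2*pi*a) = sin (2*pi*b)"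
  shows "a - b \<in> \<int>"
proof -
  have "cos (2*pi*a - 2*pi*b) = 1"
    unfolding cos_diff assms by (simp add: power2_eq_square[symmetric])
  then obtain n :: int where "2*pi*a - 2*pi*b = real_of_int n * 2 * pi"
    unfolding cos_one_2pi_int by blast
  then have "(a - b) * (2*pi) = real_of_int n * (2*pi)" by (simp add: algebra_simps)
  then have "a - b = real_of_int n" using pi_gt_zero by (subst (asm) mult_cancel_right) simp
  then show ?thesis by simp
qed

lemma Emb_eq_int: assumes "Emb x = Emb y" shows "\<forall>i. (x - y) $ i \<in> \<int>"
proof -
  have "cos (2*pi*x$1) = cos (2*pi*y$1) \<and> sin (2*pi*x$1) = sin (2*pi*y$1)"
       "cos (2*pi*x$2) = cos (2*pi*y$2) \<and> sin (2*pi*x$2) = sin (2*pi*y$2)"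
    using assms by (auto simp: Emb_def)
  then show ?thesis unfolding forall_2 using cos_sin_eq_int by simp
qed

lemma torus_eq: assumes "torus_fun f" "\<forall>i. (x - y) $ i \<in> \<int>" shows "f x = f y"
proof -
  have "f (y + (x - y)) = f y" using assms unfolding torus_fun_def by blast
  then show ?thesis by simp
qed

definition fracv :: "real^2 \<Rightarrow> real^2" where "fracv x = (\<chi> i. frac (x$i))"

lemma One2[simp]: "(One::real^2) $ i = 1"
proof -
  have "axis i (1::real) \<in> Basis" by simp
  then have "(One::real^2) \<bullet> axis i 1 = 1" by (rule inner_sum_Basis)
  then show ?thesis by (simp add: cart_eq_inner_axis)
qed

lemma fracv_box: "fracv x \<in> cbox 0 One"
  unfolding mem_box_cart One2 by (auto simp: fracv_def frac_lt_1 less_imp_le)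

lemma fracv_int: "\<forall>i. (x - fracv x) $ i \<in> \<int>"
  by (auto simp: fracv_def frac_def)

lemma Emb_fracv: "Emb (fracv x) = Emb x"
proof -
  have c: "cos (2*pi*frac a) = cos (2*pi*a)" and s: "sin (2*pi*frac a) = sin (2*pi*a)" for a :: real
  proof -
    have e: "2*pi*frac a = 2*pi*a - 2*pi*real_of_int \<lfloor>a\<rfloor>" by (simp add: frac_def algebra_simps)
    show "cos (2*pi*frac a) = cos (2*pi*a)" unfolding e cos_diff by (simp add: cos_int_2pin sin_int_2pin)
    show "sin (2*pi*frac a) = sin (2*pi*a)" unfolding e sin_diff by (simp add: cos_int_2pin sin_int_2pin)
  qed
  show ?thesis by (simp add: Emb_def fracv_def c s)
qed

lemma torus_lift:
  assumes f: "torus_fun f"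
  shows "\<exists>g. continuous_on (Emb ` cbox 0 One) g \<and> (\<forall>x. g (Emb x) = f x)"
proof -
  define S where "S = (cbox 0 One :: (real^2) set)"
  define Ts where "Ts = Emb ` S"
  define g where "g p = f (SOME x. x \<in> S \<and> Emb x = p)" for p
  have gE: "g (Emb x) = f x" for x
  proof -
    have ex: "\<exists>x'. x' \<in> S \<and> Emb x' = Emb x" using fracv_box Emb_fracv unfolding S_def by blast
    define x' where "x' = (SOME x'. x' \<in> S \<and> Emb x' = Emb x)"
    have "x' \<in> S \<and> Emb x' = Emb x" unfolding x'_def by (rule someI_ex[OF ex])
    then have "f x' = f x" using torus_eq[OF f] Emb_eq_int by blast
    then show ?thesis unfolding g_def x'_def by simp
  qed
  have contE: "continuous_on S Emb" unfolding Emb_def by (intro continuous_intros)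
  have contf: "continuous_on S f" using f unfolding torus_fun_def by (auto intro: continuous_on_subset)
  have "continuous_on Ts g"
    unfolding continuous_openin_preimage_eq
  proof (intro allI impI)
    fix V :: "real set" assume V: "open V"
    have eq: "S \<inter> Emb -` (Ts \<inter> g -` V) = S \<inter> f -` V"
    proof (intro set_eqI iffI)
      fix x assume "x \<in> S \<inter> Emb -` (Ts \<inter> g -` V)"
      then have "x \<in> S" "g (Emb x) \<in> V" by auto
      then show "x \<in> S \<inter> f -` V" by (simp add: gE)
    next
      fix x assume "x \<in> S \<inter> f -` V"
      then have "x \<in> S" "f x \<in> V" by auto
      then show "x \<in> S \<inter> Emb -` (Ts \<inter> g -` V)" unfolding Ts_def by (simp add: gE)
    qed
    have "openin (top_of_set S) (S \<inter> f -` V)"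
      using contf V unfolding continuous_openin_preimage_eq by blast
    then have "openin (top_of_set S) (S \<inter> Emb -` (Ts \<inter> g -` V))" unfolding eq .
    then show "openin (top_of_set Ts) (Ts \<inter> g -` V)"
      using Abstract_Topology_2.continuous_imp_quotient_map[OF contE Ts_def[symmetric], of "Ts \<inter> g -` V"]
      unfolding S_def by (auto simp: compact_cbox)
  qed
  then show ?thesis using gE unfolding Ts_def S_def by blast
qed

lemma torus_approx:
  assumes f: "torus_fun f" and e: "0 < e"
  shows "\<exists>q\<in>Q. \<forall>x. \<bar>f x - q x\<bar> < e"
proof -
  obtain g where g: "continuous_on (Emb ` cbox 0 One) g" "\<And>x. g (Emb x) = f x"
    using torus_lift[OF f] by blast
  have "compact (Emb ` cbox 0 One)"
    by (intro compact_continuous_image compact_cbox) (unfold Emb_def, intro continuous_intros)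
  then obtain p where p: "p \<in> Pol" "\<forall>y \<in> Emb ` cbox 0 One. \<bar>g y - p y\<bar> < e"
  proof (rule Stone_Weierstrass_HOL[where P="\<lambda>p. p \<in> Pol", OF _ _ _ _ _ _ g(1) e, THEN exE])
    show "\<And>c. (\<lambda>x. c) \<in> Pol" by (rule Pconst)
    show "\<And>f. f \<in> Pol \<Longrightarrow> continuous_on (Emb ` cbox 0 One) f" by (rule Pol_cont)
    show "\<And>f g. f \<in> Pol \<and> g \<in> Pol \<Longrightarrow> (\<lambda>x. f x + g x) \<in> Pol" by (auto intro: Padd)
    show "\<And>f g. f \<in> Pol \<and> g \<in> Pol \<Longrightarrow> (\<lambda>x. f x * g x) \<in> Pol" by (auto intro: Pmult)
    show "\<exists>f. f \<in> Pol \<and> f x \<noteq> f y" if "x \<in> Emb ` cbox 0 One \<and> y \<in> Emb ` cbox 0 One \<and> x \<noteq> y" for x y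
    proof -
      obtain a b c d a' b' c' d' where xy: "x = ((a,b),(c,d))" "y = ((a',b'),(c',d'))" by (metis prod.exhaust)
      then have "a \<noteq> a' \<or> b \<noteq> b' \<or> c \<noteq> c' \<or> d \<noteq> d'" using that by auto
      then consider "a \<noteq> a'" | "b \<noteq> b'" | "c \<noteq> c'" | "d \<noteq> d'" by blast
      then show ?thesis
      proof cases
        case 1 then show ?thesis using xy by (intro exI[of _ "\<lambda>p. fst (fst p)"]) (auto intro: P1)
      next
        case 2 then show ?thesis using xy by (intro exI[of _ "\<lambda>p. snd (fst p)"]) (auto intro: P2)
      next
        case 3 then show ?thesis using xy by (intro exI[of _ "\<lambda>p. fst (snd p)"]) (auto intro: P3)
      next
        case 4 then show ?thesis using xy by (intro exI[of _ "\<lambda>p. snd (snd p)"]) (auto intro: P4)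
      qed
    qed
  qed blast
  show ?thesis
  proof (intro bexI[of _ "\<lambda>x. p (Emb x)"] allI)
    fix x
    have "Emb x \<in> Emb ` cbox 0 One" using Emb_fracv[of x] fracv_box[of x] by (metis image_eqI)
    then show "\<bar>f x - p (Emb x)\<bar> < e" using p(2) g(2)[of x] by force
  qed (rule Pol_Q[OF p(1)])
qed

lemma vec2_eq: "vector [x$1, x$2] = (x::real^2)"
  by (simp add: vec_eq_iff forall_2)

lemma img_g: "(\<lambda>x::real^2. (x$1, x$2)) ` cbox u v = cbox (u$1, u$2) (v$1, v$2)"
proof (intro set_eqI iffI)
  fix p assume "p \<in> (\<lambda>x::real^2. (x$1, x$2)) ` cbox u v"
  then show "p \<in> cbox (u$1, u$2) (v$1, v$2)"
    by (auto simp: cbox_Pair_eq mem_box_cart)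
next
  fix p assume p: "p \<in> cbox (u$1, u$2) (v$1, v$2)"
  obtain a b where ab: "p = (a, b)" by (cases p)
  have "vector [a, b] \<in> cbox u v" using p ab by (auto simp: cbox_Pair_eq mem_box_cart forall_2)
  moreover have "p = (\<lambda>x::real^2. (x$1, x$2)) (vector [a, b])" using ab by simp
  ultimately show "p \<in> (\<lambda>x::real^2. (x$1, x$2)) ` cbox u v" by blast
qed

lemma img_h: "(\<lambda>p. vector [fst p, snd p] :: real^2) ` cbox (a, b) (c, d) = cbox (vector [a, b]) (vector [c, d])"
proof (intro set_eqI iffI)
  fix x assume "x \<in> (\<lambda>p. vector [fst p, snd p] :: real^2) ` cbox (a, b) (c, d)"
  then show "x \<in> cbox (vector [a, b]) (vector [c, d])"
    by (auto simp: cbox_Pair_eq mem_box_cart forall_2)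
next
  fix x :: "real^2" assume x: "x \<in> cbox (vector [a, b]) (vector [c, d])"
  have "(x$1, x$2) \<in> cbox (a, b) (c, d)" using x by (auto simp: cbox_Pair_eq mem_box_cart forall_2)
  moreover have "x = (\<lambda>p. vector [fst p, snd p] :: real^2) (x$1, x$2)" by (simp add: vec2_eq)
  ultimately show "x \<in> (\<lambda>p. vector [fst p, snd p] :: real^2) ` cbox (a, b) (c, d)" by blast
qed

lemma content_g: "Henstock_Kurzweil_Integration.content ((\<lambda>x::real^2. (x$1, x$2)) ` cbox u v) = 1 * Henstock_Kurzweil_Integration.content (cbox u v)"
proof -
  have ex2: "(\<exists>i::2. P i) \<longleftrightarrow> P 1 \<or> P 2" for P by (metis exhaust_2)
  show ?thesis unfolding img_g
    by (simp add: content_Pair content_cbox_if_cart UNIV_2 interval_eq_empty_cart forall_2 ex2 content_real_if not_le)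
qed

lemma integral_sep:
  fixes g1 g2 :: "real \<Rightarrow> real"
  assumes c1: "continuous_on UNIV g1" and c2: "continuous_on UNIV g2"
  shows "integral (cbox (0::real^2) One) (\<lambda>x. g1 (x$1) * g2 (x$2)) = integral {0..1} g1 * integral {0..1} g2"
proof -
  define F where "F p = g1 (fst p) * g2 (snd p)" for p :: "real \<times> real"
  have cF: "continuous_on UNIV F" unfolding F_def
    by (intro continuous_intros continuous_on_compose2[OF c1] continuous_on_compose2[OF c2]) auto
  have "integral (cbox (0, 0) (1, 1)) F = integral (cbox 0 1) (\<lambda>x. integral (cbox 0 1) (\<lambda>y. F (x, y)))"
    by (rule integral_prod_continuous) (rule continuous_on_subset[OF cF], simp)
  also have "\<dots> = integral {0..1} g1 * integral {0..1} g2"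
    by (simp add: F_def cbox_interval)
  finally have Ieq: "integral (cbox (0, 0) (1, 1)) F = integral {0..1} g1 * integral {0..1} g2" .
  have I: "(F has_integral (integral {0..1} g1 * integral {0..1} g2)) (cbox (0, 0) (1, 1))"
    unfolding Ieq[symmetric]
  proof -
    have "F integrable_on cbox (0, 0) (1, 1)" by (rule integrable_continuous, rule continuous_on_subset[OF cF], simp)
    then show "(F has_integral (integral (cbox (0, 0) (1, 1)) F)) (cbox (0, 0) (1, 1))" by (rule integrable_integral)
  qed
  have "((\<lambda>x. F ((\<lambda>x::real^2. (x$1, x$2)) x)) has_integral (1 / 1) *\<^sub>R (integral {0..1} g1 * integral {0..1} g2))
        ((\<lambda>p. vector [fst p, snd p] :: real^2) ` cbox (0, 0) (1, 1))"
  proof (rule has_integral_twiddle[OF _ _ _ _ _ _ _ I])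
    show "\<And>x::real^2. vector [fst (x$1, x$2), snd (x$1, x$2)] = x" by (simp add: vec2_eq)
    show "\<And>p. ((vector [fst p, snd p] :: real^2)$1, (vector [fst p, snd p] :: real^2)$2) = p" by simp
    show "\<And>x. continuous (at x) (\<lambda>x::real^2. (x$1, x$2))" by (intro continuous_intros)
    show "\<exists>w z. (\<lambda>x::real^2. (x$1, x$2)) ` cbox u v = cbox w z" for u v
      by (intro exI, rule img_g)
    show "\<exists>w z. (\<lambda>p. vector [fst p, snd p] :: real^2) ` cbox u v = cbox w z" for u v
    proof -
      obtain a b where u: "u = (a, b)" by (cases u)
      obtain c d where v: "v = (c, d)" by (cases v)
      show ?thesis unfolding u v by (intro exI, rule img_h)
    qed
    show "\<And>u v. Henstock_Kurzweil_Integration.content ((\<lambda>x::real^2. (x$1, x$2)) ` cbox u v) = 1 * Henstock_Kurzweil_Integration.content (cbox u v)" by (rule content_g)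
  qed (rule zero_less_one)
  moreover have "(\<lambda>p. vector [fst p, snd p] :: real^2) ` cbox (0, 0) (1, 1) = cbox 0 One"
  proof -
    have "vector [0, 0] = (0::real^2)" unfolding vec_eq_iff forall_2 by simp
    moreover have "vector [1, 1] = (One::real^2)" unfolding vec_eq_iff forall_2 One2 by simp
    ultimately show ?thesis unfolding img_h by simp
  qed
  ultimately have "((\<lambda>x::real^2. g1 (x$1) * g2 (x$2)) has_integral (integral {0..1} g1 * integral {0..1} g2)) (cbox 0 One)"
    unfolding F_def by simp
  then show ?thesis by (rule integral_unique)
qed

lemma int01_trig:
  fixes m :: int
  shows "integral {0..1} (\<lambda>s. cos (2*pi*(of_int m * s))) = (if m = 0 then 1 else 0)"
    and "integral {0..1} (\<lambda>s. sin (2*pi*(of_int m * s))) = 0"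
proof -
  have "integral {0..1} (\<lambda>s. cos (2*pi*(of_int m * s))) = (if m = 0 then 1 else 0) \<and>
        integral {0..1} (\<lambda>s. sin (2*pi*(of_int m * s))) = 0"
  proof (cases "m = 0")
    case True then show ?thesis by simp
  next
    case False
    define c :: real where "c = 2 * pi * real_of_int m"
    have c0: "c \<noteq> 0" using False by (simp add: c_def)
    have "((\<lambda>s. cos (c * s)) has_integral (sin (c * 1) / c - sin (c * 0) / c)) {0..1}"
    proof (rule fundamental_theorem_of_calculus)
      fix x :: real
      have "((\<lambda>s. sin (c * s) / c) has_real_derivative cos (c * x)) (at x within {0..1})"
        apply (rule derivative_eq_intros refl)+
        using c0 apply (simp_all add: field_simps)
        done
      then show "((\<lambda>s. sin (c * s) / c) has_vector_derivative cos (c * x)) (at x within {0..1})"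
        by (simp add: has_real_derivative_iff_has_vector_derivative)
    qed simp
    moreover have "sin (c * 1) = 0" unfolding c_def using sin_int_2pin[of m] by simp
    ultimately have i1: "integral {0..1} (\<lambda>s. cos (c * s)) = 0" by (simp add: integral_unique)
    have "((\<lambda>s. sin (c * s)) has_integral ((- cos (c * 1) / c) - (- cos (c * 0) / c))) {0..1}"
    proof (rule fundamental_theorem_of_calculus)
      fix x :: real
      have "((\<lambda>s. - cos (c * s) / c) has_real_derivative sin (c * x)) (at x within {0..1})"
        apply (rule derivative_eq_intros refl)+
        using c0 apply (simp_all add: field_simps)
        done
      then show "((\<lambda>s. - cos (c * s) / c) has_vector_derivative sin (c * x)) (at x within {0..1})"
        by (simp add: has_real_derivative_iff_has_vector_derivative)
    qed simp
    moreover have "cos (c * 1) = 1" unfolding c_def using cos_int_2pin[of m] by simp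
    ultimately have i2: "integral {0..1} (\<lambda>s. sin (c * s)) = 0" by (simp add: integral_unique)
    show ?thesis using i1 i2 False unfolding c_def by (simp add: mult.assoc)
  qed
  then show "integral {0..1} (\<lambda>s. cos (2*pi*(of_int m * s))) = (if m = 0 then 1 else 0)"
    and "integral {0..1} (\<lambda>s. sin (2*pi*(of_int m * s))) = 0" by auto
qed

lemma haar_ch:
  "haar_int (ch_c a b) = (if a = 0 \<and> b = 0 then 1 else 0)"
  "haar_int (ch_s a b) = 0"
proof -
  let ?c = "\<lambda>m s. cos (2*pi*(of_int m * s))" and ?s = "\<lambda>m s. sin (2*pi*(of_int m * s))"
  have cc: "continuous_on UNIV (?c m)" "continuous_on UNIV (?s m)" for m by (intro continuous_intros)+
  have ip: "(\<lambda>x::real^2. g1 (x$1) * g2 (x$2)) integrable_on cbox 0 One"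
    if "continuous_on UNIV g1" "continuous_on UNIV g2" for g1 g2 :: "real \<Rightarrow> real"
  proof -
    have a1: "continuous_on UNIV (\<lambda>x::real^2. g1 (x$1))"
      by (rule continuous_on_compose2[OF that(1)]) (auto intro!: continuous_intros)
    have a2: "continuous_on UNIV (\<lambda>x::real^2. g2 (x$2))"
      by (rule continuous_on_compose2[OF that(2)]) (auto intro!: continuous_intros)
    show ?thesis
      by (rule integrable_continuous, rule continuous_on_subset[OF continuous_on_mult[OF a1 a2]]) simp
  qed
  have ec: "ch_c a b = (\<lambda>x. ?c a (x$1) * ?c b (x$2) - ?s a (x$1) * ?s b (x$2))"
    by (intro ext) (simp only: ch_c_def distrib_left cos_add)
  have es: "ch_s a b = (\<lambda>x. ?s a (x$1) * ?c b (x$2) + ?c a (x$1) * ?s b (x$2))"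
    by (intro ext) (simp only: ch_s_def distrib_left sin_add)
  have iA: "(\<lambda>x::real^2. ?c a (x$1) * ?c b (x$2)) integrable_on cbox 0 One" by (rule ip[OF cc(1) cc(1)])
  have iB: "(\<lambda>x::real^2. ?s a (x$1) * ?s b (x$2)) integrable_on cbox 0 One" by (rule ip[OF cc(2) cc(2)])
  have iC: "(\<lambda>x::real^2. ?s a (x$1) * ?c b (x$2)) integrable_on cbox 0 One" by (rule ip[OF cc(2) cc(1)])
  have iD: "(\<lambda>x::real^2. ?c a (x$1) * ?s b (x$2)) integrable_on cbox 0 One" by (rule ip[OF cc(1) cc(2)])
  have "haar_int (ch_c a b) = integral (cbox 0 One) (\<lambda>x::real^2. ?c a (x$1) * ?c b (x$2)) - integral (cbox 0 One) (\<lambda>x::real^2. ?s a (x$1) * ?s b (x$2))"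
    unfolding haar_int_def ec by (rule integral_diff[OF iA iB])
  also have "\<dots> = (if a = 0 \<and> b = 0 then 1 else 0)"
    unfolding integral_sep[OF cc(1) cc(1)] integral_sep[OF cc(2) cc(2)] int01_trig by simp
  finally show "haar_int (ch_c a b) = (if a = 0 \<and> b = 0 then 1 else 0)" .
  have "haar_int (ch_s a b) = integral (cbox 0 One) (\<lambda>x::real^2. ?s a (x$1) * ?c b (x$2)) + integral (cbox 0 One) (\<lambda>x::real^2. ?c a (x$1) * ?s b (x$2))"
    unfolding haar_int_def es by (rule integral_add[OF iC iD])
  also have "\<dots> = 0"
    unfolding integral_sep[OF cc(2) cc(1)] integral_sep[OF cc(1) cc(2)] int01_trig by simp
  finally show "haar_int (ch_s a b) = 0" .
qed

lemma nat_sq2: "(a::nat)^2 = 2 * b^2 \<Longrightarrow> b = 0"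
proof (induction b arbitrary: a rule: less_induct)
  case (less b)
  show ?case
  proof (rule ccontr)
    assume b0: "b \<noteq> 0"
    have "even (a^2)" using less.prems by simp
    then have "even a" by simp
    then obtain c where c: "a = 2 * c" by blast
    then have "4 * c^2 = 2 * b^2" using less.prems by (simp add: power_mult_distrib)
    then have bc: "b^2 = 2 * c^2" by simp
    then have "even (b^2)" by simp
    then have "even b" by simp
    then obtain d where d: "b = 2 * d" by blast
    then have "c^2 = 2 * d^2" using bc by (simp add: power_mult_distrib)
    moreover have "d < b" using d b0 by simp
    ultimately have "d = 0" using less.IH by blast
    then show False using d b0 by simp
  qed
qed

lemma sqrt2_indep: fixes a b :: int assumes "real_of_int a + real_of_int b * sqrt 2 = 0" shows "a = 0 \<and> b = 0"
proof (cases "b = 0")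
  case True then show ?thesis using assms by simp
next
  case False
  have "real_of_int a = - real_of_int b * sqrt 2" using assms by simp
  then have "(real_of_int a)^2 = 2 * (real_of_int b)^2" by (simp add: power_mult_distrib)
  then have "real_of_int (a^2) = real_of_int (2 * b^2)" by simp
  then have ab2: "a^2 = 2 * b^2" by (simp only: of_int_eq_iff)
  have "int ((nat \<bar>a\<bar>)^2) = int (2 * (nat \<bar>b\<bar>)^2)" using ab2 by simp
  then have "(nat \<bar>a\<bar>)^2 = 2 * (nat \<bar>b\<bar>)^2" by (simp only: of_nat_eq_iff)
  then have "nat \<bar>b\<bar> = 0" by (rule nat_sq2)
  then show ?thesis using False by simp
qed

definition phi :: "real \<Rightarrow> real^2" where "phi u = Cf u *\<^sub>R vector [1, sqrt 2]"

lemma phi_meas[measurable]: "phi \<in> borel_measurable borel"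
  unfolding phi_def by measurable

lemma phi_comp: "(t *\<^sub>R phi u + x0) $ 1 = t * Cf u + x0 $ 1" "(t *\<^sub>R phi u + x0) $ 2 = t * Cf u * sqrt 2 + x0 $ 2"
  by (simp_all add: phi_def)

definition gk :: "int \<Rightarrow> int \<Rightarrow> real \<Rightarrow> real" where "gk a b u = Cf u * (of_int a + of_int b * sqrt 2)"

lemma gk_meas[measurable]: "gk a b \<in> borel_measurable borel" unfolding gk_def by measurable

lemma gk_inj: "\<not> (a = 0 \<and> b = 0) \<Longrightarrow> inj_on (gk a b) {0<..<1}"
  using sqrt2_indep[of a b] Cf_inj unfolding gk_def inj_on_def by auto

lemma ch_phi:
  "ch_c a b (t *\<^sub>R phi u + x0) = cos (2*pi*t*gk a b u + 2*pi*(of_int a * x0$1 + of_int b * x0$2))"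
  "ch_s a b (t *\<^sub>R phi u + x0) = sin (2*pi*t*gk a b u + 2*pi*(of_int a * x0$1 + of_int b * x0$2))"
  unfolding ch_c_def ch_s_def phi_comp by (simp_all add: gk_def algebra_simps)

definition Ak :: "int \<Rightarrow> int \<Rightarrow> real \<Rightarrow> real" where "Ak a b t = (\<integral>u. cos (2*pi*t*gk a b u) \<partial>M)"
definition Bk :: "int \<Rightarrow> int \<Rightarrow> real \<Rightarrow> real" where "Bk a b t = (\<integral>u. sin (2*pi*t*gk a b u) \<partial>M)"

lemma intM_bound: fixes f :: "real \<Rightarrow> real" assumes "f \<in> borel_measurable borel" "\<And>x. \<bar>f x\<bar> \<le> B"
  shows "\<bar>\<integral>u. f u \<partial>M\<bar> \<le> B"
proof -
  have "\<bar>\<integral>u. f u \<partial>M\<bar> \<le> (\<integral>u. B \<partial>M)"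
    by (rule integral_abs_bound_integral) (use assms intM[OF assms] in auto)
  also have "\<dots> = B" by (simp add: measure_M_UNIV)
  finally show ?thesis .
qed

lemma Ak_bound: "\<bar>Ak a b t\<bar> \<le> 1" and Bk_bound: "\<bar>Bk a b t\<bar> \<le> 1"
proof -
  have m1: "(\<lambda>u. cos (2*pi*t*gk a b u)) \<in> borel_measurable borel" by measurable
  have m2: "(\<lambda>u. sin (2*pi*t*gk a b u)) \<in> borel_measurable borel" by measurable
  show "\<bar>Ak a b t\<bar> \<le> 1" unfolding Ak_def by (rule intM_bound[OF m1]) simp
  show "\<bar>Bk a b t\<bar> \<le> 1" unfolding Bk_def by (rule intM_bound[OF m2]) simp
qed

lemma Ak_meas[measurable]: "Ak a b \<in> borel_measurable borel" and Bk_meas[measurable]: "Bk a b \<in> borel_measurable borel"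
proof -
  have "(\<lambda>p. cos (2*pi*fst p*gk a b (snd p))) \<in> borel_measurable (borel \<Otimes>\<^sub>M M)" by measurable
  then have "case_prod (\<lambda>t u. cos (2*pi*t*gk a b u)) \<in> borel_measurable (borel \<Otimes>\<^sub>M M)"
    by (simp add: case_prod_beta')
  then show "Ak a b \<in> borel_measurable borel" unfolding Ak_def[abs_def] by (rule Mfin.borel_measurable_lebesgue_integral)
  have "(\<lambda>p. sin (2*pi*fst p*gk a b (snd p))) \<in> borel_measurable (borel \<Otimes>\<^sub>M M)" by measurable
  then have "case_prod (\<lambda>t u. sin (2*pi*t*gk a b u)) \<in> borel_measurable (borel \<Otimes>\<^sub>M M)"
    by (simp add: case_prod_beta')
  then show "Bk a b \<in> borel_measurable borel" unfolding Bk_def[abs_def] by (rule Mfin.borel_measurable_lebesgue_integral)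
qed

definition hh :: "nat \<Rightarrow> real \<Rightarrow> real" where
  "hh n t = (case from_nat n :: int \<times> int of (a, b) \<Rightarrow> if a = 0 \<and> b = 0 then 0 else ((Ak a b t)^2 + (Bk a b t)^2) / 2)"

lemma hh_meas[measurable]: "hh n \<in> borel_measurable borel"
proof -
  obtain a b :: int where ab: "from_nat n = (a, b)" by (metis prod.exhaust)
  have "hh n = (\<lambda>t. if a = 0 \<and> b = 0 then 0 else ((Ak a b t)^2 + (Bk a b t)^2) / 2)"
    by (simp add: hh_def ab fun_eq_iff)
  also have "\<dots> \<in> borel_measurable borel" by measurable
  finally show ?thesis .
qed

lemma hh_bounds: "0 \<le> hh n t" "hh n t \<le> 1"
proof -
  obtain a b :: int where ab: "from_nat n = (a, b)" by (metis prod.exhaust)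
  have "(Ak a b t)^2 \<le> 1" "(Bk a b t)^2 \<le> 1"
    using Ak_bound[of a b t] Bk_bound[of a b t] by (simp_all add: abs_square_le_1)
  then show "0 \<le> hh n t" "hh n t \<le> 1" unfolding hh_def ab by auto
qed

lemma hh_avg: "((\<lambda>T. (\<integral>t. indicator {0..T} t * hh n t \<partial>lborel) / T) \<longlongrightarrow> 0) at_top"
proof -
  obtain a b :: int where ab: "from_nat n = (a, b)" by (metis prod.exhaust)
  show ?thesis
  proof (cases "a = 0 \<and> b = 0")
    case True then show ?thesis unfolding hh_def ab by simp
  next
    case False
    have w: "((\<lambda>T. (\<integral>t. indicator {0..T} t * ((\<integral>u. cos (2*pi*t*gk a b u) \<partial>M)^2 + (\<integral>u. sin (2*pi*t*gk a b u) \<partial>M)^2) \<partial>lborel) / T) \<longlongrightarrow> 0) at_top"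
      by (rule wiener[OF gk_meas gk_inj[OF False]])
    have "((\<lambda>T. ((\<integral>t. indicator {0..T} t * ((Ak a b t)^2 + (Bk a b t)^2) \<partial>lborel) / T) / 2) \<longlongrightarrow> 0 / 2) at_top"
      using w unfolding Ak_def Bk_def by (intro tendsto_divide) auto
    moreover have eqT: "(\<integral>t. indicator {0..T} t * hh n t \<partial>lborel) = (\<integral>t. indicator {0..T} t * ((Ak a b t)^2 + (Bk a b t)^2) \<partial>lborel) / 2" for T
    proof -
      have "(\<lambda>t. indicator {0..T} t * hh n t) = (\<lambda>t. indicator {0..T} t * ((Ak a b t)^2 + (Bk a b t)^2) / 2)"
        unfolding hh_def ab using False by (auto simp: fun_eq_iff)
      then show ?thesis by (simp only: integral_divide_zero)
    qed
    ultimately show ?thesis unfolding eqT by (simp add: mult.commute)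
  qed
qed

lemma torus_bounded: assumes "torus_fun f" shows "\<exists>B. \<forall>x. \<bar>f x\<bar> \<le> B"
proof -
  obtain q where q: "q \<in> Q" "\<forall>x. \<bar>f x - q x\<bar> < 1" using torus_approx[OF assms, of 1] by auto
  obtain B where B: "\<forall>x. \<bar>q x\<bar> \<le> B" using Q_bounded[OF q(1)] by blast
  have "\<bar>f x\<bar> \<le> B + 1" for x using q(2)[rule_format, of x] B[rule_format, of x] by linarith
  then show ?thesis by blast
qed

lemma comp_meas: assumes "continuous_on UNIV f" shows "(\<lambda>u. f (t *\<^sub>R phi u + x0)) \<in> borel_measurable borel"
  by (rule borel_measurable_continuous_on[OF assms]) measurable

lemma curve_M: assumes "continuous_on UNIV f" "\<And>x. \<bar>f x\<bar> \<le> B"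
  shows "curve_int phi x0 t f = (\<integral>u. f (t *\<^sub>R phi u + x0) \<partial>M)"
  unfolding curve_int_def by (rule integral_M_eq[OF comp_meas[OF assms(1)]]) (use assms(2) in auto)

lemma cos_shift_int: "cos (2*pi*(x + of_int n)) = cos (2*pi*x)"
  by (simp add: distrib_left cos_add cos_int_2pin sin_int_2pin)

lemma cantor_cos: assumes "(0 \<le> R \<and> R \<le> 1/3) \<or> (2/3 \<le> R \<and> R \<le> 1)"
  shows "- 1/2 \<le> cos (2*pi*(of_int N + R))"
proof -
  have c3: "cos (2*pi/3) = - 1/2"
  proof -
    have "cos (2*pi/3) = cos (pi - pi/3)" by (simp add: field_simps)
    also have "\<dots> = - cos (pi/3)" by (subst cos_diff) simp
    finally show ?thesis by (simp add: cos_60)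
  qed
  have base: "- 1/2 \<le> cos (2*pi*r)" if "0 \<le> r" "r \<le> 1/3" for r
  proof -
    have "cos (2*pi/3) \<le> cos (2*pi*r)" by (rule cos_monotone_0_pi_le) (use that in auto)
    then show ?thesis using c3 by simp
  qed
  have "cos (2*pi*(of_int N + R)) = cos (2*pi*R)" using cos_shift_int[of R N] by (simp add: add.commute)
  moreover have "- 1/2 \<le> cos (2*pi*R)"
  proof (cases "R \<le> 1/3")
    case True then show ?thesis using assms base by auto
  next
    case False
    then have "2/3 \<le> R" "R \<le> 1" using assms by auto
    then have "- 1/2 \<le> cos (2*pi*(1 - R))" by (intro base) auto
    moreover have "cos (2*pi*(1 - R)) = cos (2*pi*R)"
      by (simp add: right_diff_distrib cos_diff)
    ultimately show ?thesis by simp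
  qed
  ultimately show ?thesis by simp
qed

definition G :: "real \<Rightarrow> real" where "G s = max 0 (- cos (2*pi* s) - 1/2)"

lemma G_cont: "continuous_on UNIV G" unfolding G_def by (intro continuous_intros)

lemma G_zero_cantor: "G (3 ^ n * Cf u) = 0"
proof -
  obtain N :: int and R :: real where NR: "3 ^ n * Cf u = of_int N + R" "(0 \<le> R \<and> R \<le> 1/3) \<or> (2/3 \<le> R \<and> R \<le> 1)"
    using Cf_cantor[of n u] by blast
  show ?thesis unfolding G_def NR(1) using cantor_cos[OF NR(2), of N] by simp
qed

lemma not_equi: "\<not> equidistributed (curve_int phi x0)"
proof
  assume eq: "equidistributed (curve_int phi x0)"
  define f where "f x = G (x$1 - x0$1)" for x :: "real^2"
  have fc: "continuous_on UNIV f" unfolding f_def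
    by (rule continuous_on_compose2[OF G_cont]) (auto intro!: continuous_intros)
  have tf: "torus_fun f" unfolding torus_fun_def
  proof (intro conjI fc allI impI)
    fix v k :: "real^2" assume "\<forall>i. k $ i \<in> \<int>"
    then obtain n where n: "k $ 1 = of_int n" by (meson Ints_cases)
    show "f (v + k) = f v" unfolding f_def G_def
      using cos_shift_int[of "v$1 - x0$1" n] n by (simp add: algebra_simps)
  qed
  have lim: "((\<lambda>t. curve_int phi x0 t f) \<longlongrightarrow> haar_int f) at_top"
    using eq tf unfolding equidistributed_def by blast
  have zero: "curve_int phi x0 (3 ^ n) f = 0" for n :: nat
  proof -
    have "f (3 ^ n *\<^sub>R phi u + x0) = 0" for u
      unfolding f_def phi_comp using G_zero_cantor[of n u] by simp
    then show ?thesis unfolding curve_int_def by simp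
  qed
  have pow: "filterlim (\<lambda>n::nat. (3::real) ^ n) at_top sequentially"
  proof (rule filterlim_at_top_mono[OF filterlim_real_sequentially])
    have "real n \<le> 3 ^ n" for n
    proof (induction n)
      case (Suc n)
      have a: "1 \<le> (3::real) ^ n" by simp
      have b: "(3::real) ^ Suc n = 3 * 3 ^ n" by simp
      show ?case unfolding b of_nat_Suc using a Suc.IH by linarith
    qed simp
    then show "\<forall>\<^sub>F n in sequentially. real n \<le> 3 ^ n" by simp
  qed
  have "(\<lambda>n::nat. curve_int phi x0 (3 ^ n) f) \<longlonglongrightarrow> haar_int f"
    using filterlim_compose[OF lim pow] by (simp add: o_def)
  then have h0: "haar_int f = 0" unfolding zero using LIMSEQ_unique tendsto_const by blast
  define p :: "real^2" where "p = vector [frac (x0$1 + 1/2), 0]"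
  have p_box: "p \<in> cbox 0 One"
    unfolding mem_box_cart One2 by (auto simp: p_def forall_2 frac_lt_1 less_imp_le)
  have "f p = 1/2"
  proof -
    have "p$1 - x0$1 = 1/2 + of_int (- \<lfloor>x0$1 + 1/2\<rfloor>)" by (simp add: p_def frac_def)
    then have "cos (2*pi*(p$1 - x0$1)) = cos (2*pi*(1/2))" by (simp only: cos_shift_int)
    then show ?thesis unfolding f_def G_def by simp
  qed
  moreover have "f p = 0"
  proof (rule has_integral_0_cbox_imp_0[OF continuous_on_subset[OF fc] _ _ _ p_box])
    show "\<And>x. x \<in> box 0 One \<Longrightarrow> 0 \<le> f x" by (simp add: f_def G_def)
    have "f integrable_on cbox 0 One" by (rule integrable_continuous[OF continuous_on_subset[OF fc]]) simp
    then show "(f has_integral 0) (cbox 0 One)" using h0 unfolding haar_int_def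
      by (metis integrable_integral)
    have "(1/2) *\<^sub>R (One::real^2) \<in> box 0 One" unfolding mem_box_cart vector_scaleR_component One2 by simp
    then show "box 0 (One::real^2) \<noteq> {}" by blast
  qed simp
  ultimately show False by simp
qed

lemma int_trig_shift:
  "(\<integral>u. cos (2*pi*t*gk a b u + C) \<partial>M) = Ak a b t * cos C - Bk a b t * sin C"
  "(\<integral>u. sin (2*pi*t*gk a b u + C) \<partial>M) = Bk a b t * cos C + Ak a b t * sin C"
proof -
  have m1: "(\<lambda>u. cos (2*pi*t*gk a b u) * c) \<in> borel_measurable borel" for c by measurable
  have m2: "(\<lambda>u. sin (2*pi*t*gk a b u) * c) \<in> borel_measurable borel" for c by measurable
  have i1: "integrable M (\<lambda>u. cos (2*pi*t*gk a b u) * c)" for c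
    by (rule intM[OF m1, where B="\<bar>c\<bar>"]) (simp add: abs_mult mult_left_le_one_le)
  have i2: "integrable M (\<lambda>u. sin (2*pi*t*gk a b u) * c)" for c
    by (rule intM[OF m2, where B="\<bar>c\<bar>"]) (simp add: abs_mult mult_left_le_one_le)
  have "(\<integral>u. cos (2*pi*t*gk a b u + C) \<partial>M) = (\<integral>u. cos (2*pi*t*gk a b u) * cos C - sin (2*pi*t*gk a b u) * sin C \<partial>M)"
    by (simp add: cos_add)
  also have "\<dots> = (\<integral>u. cos (2*pi*t*gk a b u) * cos C \<partial>M) - (\<integral>u. sin (2*pi*t*gk a b u) * sin C \<partial>M)"
    by (rule Bochner_Integration.integral_diff[OF i1 i2])
  also have "\<dots> = Ak a b t * cos C - Bk a b t * sin C" by (simp add: Ak_def Bk_def)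
  finally show "(\<integral>u. cos (2*pi*t*gk a b u + C) \<partial>M) = Ak a b t * cos C - Bk a b t * sin C" .
  have "(\<integral>u. sin (2*pi*t*gk a b u + C) \<partial>M) = (\<integral>u. sin (2*pi*t*gk a b u) * cos C + cos (2*pi*t*gk a b u) * sin C \<partial>M)"
    by (simp add: sin_add)
  also have "\<dots> = (\<integral>u. sin (2*pi*t*gk a b u) * cos C \<partial>M) + (\<integral>u. cos (2*pi*t*gk a b u) * sin C \<partial>M)"
    by (rule Bochner_Integration.integral_add[OF i2 i1])
  also have "\<dots> = Bk a b t * cos C + Ak a b t * sin C" by (simp add: Ak_def Bk_def)
  finally show "(\<integral>u. sin (2*pi*t*gk a b u + C) \<partial>M) = Bk a b t * cos C + Ak a b t * sin C" .
qed

lemma Q_int_cbox: "q \<in> Q \<Longrightarrow> q integrable_on cbox 0 One"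
  by (rule integrable_continuous[OF continuous_on_subset[OF Q_cont]]) auto

lemma weak_main: "weakly_equidistributed (curve_int phi x0)"
proof -
  obtain Aset where A0: "Aset \<subseteq> {0..} \<and> Aset \<in> sets lebesgue \<and>
      ((\<lambda>T. measure lebesgue (Aset \<inter> {0..T}) / T) \<longlongrightarrow> 1) at_top \<and>
      (\<forall>n. (hh n \<longlongrightarrow> 0) (inf at_top (principal Aset)))"
    using density_set[OF hh_meas hh_bounds hh_avg] by (rule exE)
  note A = A0[THEN conjunct1] A0[THEN conjunct2, THEN conjunct1]
    A0[THEN conjunct2, THEN conjunct2, THEN conjunct1] A0[THEN conjunct2, THEN conjunct2, THEN conjunct2]
  define F where "F = inf at_top (principal Aset)"
  have AB: "(Ak a b \<longlongrightarrow> 0) F \<and> (Bk a b \<longlongrightarrow> 0) F" if ab: "\<not> (a = 0 \<and> b = 0)" for a b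
  proof -
    define n where "n = to_nat (a, b)"
    have hn: "hh n t = ((Ak a b t)^2 + (Bk a b t)^2) / 2" for t unfolding hh_def n_def using ab by auto
    have lim: "((\<lambda>t. sqrt (2 * hh n t)) \<longlongrightarrow> sqrt (2 * 0)) F"
      using A(4) unfolding F_def by (intro tendsto_intros) auto
    have "(Ak a b \<longlongrightarrow> 0) F"
    proof (rule Lim_null_comparison[OF _ lim[simplified]])
      show "\<forall>\<^sub>F t in F. norm (Ak a b t) \<le> sqrt (2 * hh n t)"
      proof (intro always_eventually allI)
        fix t
        show "norm (Ak a b t) \<le> sqrt (2 * hh n t)"
          using real_le_rsqrt[of "\<bar>Ak a b t\<bar>" "2 * hh n t"] by (simp add: hn)
      qed
    qed
    moreover have "(Bk a b \<longlongrightarrow> 0) F"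
    proof (rule Lim_null_comparison[OF _ lim[simplified]])
      show "\<forall>\<^sub>F t in F. norm (Bk a b t) \<le> sqrt (2 * hh n t)"
      proof (intro always_eventually allI)
        fix t
        show "norm (Bk a b t) \<le> sqrt (2 * hh n t)"
          using real_le_rsqrt[of "\<bar>Bk a b t\<bar>" "2 * hh n t"] by (simp add: hn)
      qed
    qed
    ultimately show ?thesis by blast
  qed
  have one: "curve_int phi x0 t (\<lambda>x. 1) = 1" for t
  proof -
    have "curve_int phi x0 t (\<lambda>x. 1) = (\<integral>u. 1 \<partial>M)" by (rule curve_M[where B=1]) auto
    then show ?thesis by (simp add: measure_M_UNIV)
  qed
  have good: "((\<lambda>t. curve_int phi x0 t q) \<longlongrightarrow> haar_int q) F" if "q \<in> Q" for q
    using that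
  proof (induction q rule: Q.induct)
    case (Qc a b)
    show ?case
    proof (cases "a = 0 \<and> b = 0")
      case True
      then have e: "ch_c a b = (\<lambda>x. 1)" by (auto simp: ch_c_def fun_eq_iff)
      show ?thesis unfolding e one using haar_ch(1)[of a b] True e by simp
    next
      case False
      define C where "C = 2*pi*(of_int a * x0$1 + of_int b * x0$2)"
      have "curve_int phi x0 t (ch_c a b) = Ak a b t * cos C - Bk a b t * sin C" for t
      proof -
        have "curve_int phi x0 t (ch_c a b) = (\<integral>u. ch_c a b (t *\<^sub>R phi u + x0) \<partial>M)"
          by (rule curve_M[where B=1]) (auto simp: ch_c_def intro!: continuous_intros)
        also have "\<dots> = (\<integral>u. cos (2*pi*t*gk a b u + C) \<partial>M)" by (simp add: ch_phi C_def)
        also have "\<dots> = Ak a b t * cos C - Bk a b t * sin C" by (rule int_trig_shift)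
        finally show ?thesis .
      qed
      moreover have "((\<lambda>t. Ak a b t * cos C - Bk a b t * sin C) \<longlongrightarrow> 0 * cos C - 0 * sin C) F"
        using AB[OF False] by (intro tendsto_intros) auto
      ultimately show ?thesis using haar_ch(1)[of a b] False by simp
    qed
  next
    case (Qs a b)
    show ?case
    proof (cases "a = 0 \<and> b = 0")
      case True
      then have e: "ch_s a b = (\<lambda>x. 0)" by (auto simp: ch_s_def fun_eq_iff)
      show ?thesis unfolding e using haar_ch(2)[of a b] e by (simp add: curve_int_def)
    next
      case False
      define C where "C = 2*pi*(of_int a * x0$1 + of_int b * x0$2)"
      have "curve_int phi x0 t (ch_s a b) = Bk a b t * cos C + Ak a b t * sin C" for t
      proof -
        have "curve_int phi x0 t (ch_s a b) = (\<integral>u. ch_s a b (t *\<^sub>R phi u + x0) \<partial>M)"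
          by (rule curve_M[where B=1]) (auto simp: ch_s_def intro!: continuous_intros)
        also have "\<dots> = (\<integral>u. sin (2*pi*t*gk a b u + C) \<partial>M)" by (simp add: ch_phi C_def)
        also have "\<dots> = Bk a b t * cos C + Ak a b t * sin C" by (rule int_trig_shift)
        finally show ?thesis .
      qed
      moreover have "((\<lambda>t. Bk a b t * cos C + Ak a b t * sin C) \<longlongrightarrow> 0 * cos C + 0 * sin C) F"
        using AB[OF False] by (intro tendsto_intros) auto
      ultimately show ?thesis using haar_ch(2)[of a b] by simp
    qed
  next
    case (Qadd f g)
    obtain Bf where Bf: "\<And>x. \<bar>f x\<bar> \<le> Bf" using Q_bounded[OF Qadd.hyps(1)] by blast
    obtain Bg where Bg: "\<And>x. \<bar>g x\<bar> \<le> Bg" using Q_bounded[OF Qadd.hyps(2)] by blast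
    have fc: "continuous_on UNIV f" and gc: "continuous_on UNIV g" using Q_cont Qadd.hyps by auto
    have "curve_int phi x0 t (\<lambda>x. f x + g x) = curve_int phi x0 t f + curve_int phi x0 t g" for t
    proof -
      have b: "\<bar>f x + g x\<bar> \<le> Bf + Bg" for x using Bf[of x] Bg[of x] by linarith
      have "curve_int phi x0 t (\<lambda>x. f x + g x) = (\<integral>u. f (t *\<^sub>R phi u + x0) + g (t *\<^sub>R phi u + x0) \<partial>M)"
        by (rule curve_M[OF continuous_on_add[OF fc gc] b])
      also have "\<dots> = (\<integral>u. f (t *\<^sub>R phi u + x0) \<partial>M) + (\<integral>u. g (t *\<^sub>R phi u + x0) \<partial>M)"
        by (rule Bochner_Integration.integral_add[OF intM[OF comp_meas[OF fc] Bf] intM[OF comp_meas[OF gc] Bg]])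
      also have "\<dots> = curve_int phi x0 t f + curve_int phi x0 t g"
        using curve_M[OF fc Bf] curve_M[OF gc Bg] by simp
      finally show ?thesis .
    qed
    moreover have "haar_int (\<lambda>x. f x + g x) = haar_int f + haar_int g"
      unfolding haar_int_def by (rule integral_add[OF Q_int_cbox[OF Qadd.hyps(1)] Q_int_cbox[OF Qadd.hyps(2)]])
    ultimately show ?case using tendsto_add[OF Qadd.IH] by simp
  next
    case (Qscale f c)
    have "curve_int phi x0 t (\<lambda>x. c * f x) = c * curve_int phi x0 t f" for t
      unfolding curve_int_def by (rule integral_mult_right)
    moreover have "haar_int (\<lambda>x. c * f x) = c * haar_int f"
      unfolding haar_int_def by (rule integral_mult_right)
    ultimately show ?case using tendsto_mult[OF tendsto_const Qscale.IH, of c] by simp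
  qed
  show ?thesis unfolding weakly_equidistributed_def
  proof (intro exI[of _ Aset] conjI allI impI A(1) A(2) A(3))
    fix f assume tf: "torus_fun f"
    show "((\<lambda>t. curve_int phi x0 t f) \<longlongrightarrow> haar_int f) (inf at_top (principal Aset))"
      unfolding F_def[symmetric]
    proof (rule tendstoI)
      fix e :: real assume e: "0 < e"
      obtain q where q: "q \<in> Q" "\<And>x. \<bar>f x - q x\<bar> < e/3" using torus_approx[OF tf, of "e/3"] e by auto
      obtain Bf where Bf: "\<And>x. \<bar>f x\<bar> \<le> Bf" using torus_bounded[OF tf] by blast
      obtain Bq where Bq: "\<And>x. \<bar>q x\<bar> \<le> Bq" using Q_bounded[OF q(1)] by blast
      have fc: "continuous_on UNIV f" using tf unfolding torus_fun_def by blast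
      have qc: "continuous_on UNIV q" using Q_cont[OF q(1)] .
      have c1: "\<bar>curve_int phi x0 t f - curve_int phi x0 t q\<bar> \<le> e/3" for t
      proof -
        have "curve_int phi x0 t f - curve_int phi x0 t q = (\<integral>u. f (t *\<^sub>R phi u + x0) - q (t *\<^sub>R phi u + x0) \<partial>M)"
          unfolding curve_M[OF fc Bf] curve_M[OF qc Bq]
          by (rule Bochner_Integration.integral_diff[OF intM[OF comp_meas[OF fc] Bf] intM[OF comp_meas[OF qc] Bq], symmetric])
        also have "\<bar>\<dots>\<bar> \<le> e/3"
        proof (rule intM_bound)
          show "(\<lambda>u. f (t *\<^sub>R phi u + x0) - q (t *\<^sub>R phi u + x0)) \<in> borel_measurable borel"
            using comp_meas[OF fc] comp_meas[OF qc] by (rule borel_measurable_diff)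
          show "\<bar>f (t *\<^sub>R phi u + x0) - q (t *\<^sub>R phi u + x0)\<bar> \<le> e/3" for u using q(2) less_imp_le by blast
        qed
        finally show ?thesis .
      qed
      have c2: "\<bar>haar_int f - haar_int q\<bar> \<le> e/3"
      proof -
        have fi: "f integrable_on cbox 0 One" by (rule integrable_continuous[OF continuous_on_subset[OF fc]]) auto
        have "haar_int f - haar_int q = integral (cbox 0 One) (\<lambda>x. f x - q x)"
          unfolding haar_int_def by (rule integral_diff[OF fi Q_int_cbox[OF q(1)], symmetric])
        also have "\<bar>\<dots>\<bar> \<le> e/3 * Henstock_Kurzweil_Integration.content (cbox (0::real^2) One)"
          using Henstock_Kurzweil_Integration.integrable_bound[of "e/3" "\<lambda>x. f x - q x" 0 One]
            integrable_diff[OF fi Q_int_cbox[OF q(1)]] q(2) e less_imp_le by auto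
        finally show ?thesis by (simp add: content_unit)
      qed
      have "\<forall>\<^sub>F t in F. dist (curve_int phi x0 t q) (haar_int q) < e/3"
        using tendstoD[OF good[OF q(1)], of "e/3"] e by simp
      then show "\<forall>\<^sub>F t in F. dist (curve_int phi x0 t f) (haar_int f) < e"
      proof eventually_elim
        case (elim t)
        then show ?case using c1[of t] c2 unfolding dist_real_def abs_le_iff abs_less_iff by linarith
      qed
    qed
  qed
qed

theorem theorem5p3:
  shows "\<exists>\<phi> :: real \<Rightarrow> real^2. \<phi> \<in> borel_measurable lborel \<and>
           (\<forall>x0 :: real^2. weakly_equidistributed (curve_int \<phi> x0) \<and>
                           \<not> equidistributed (curve_int \<phi> x0))"
proof (intro exI[of _ phi] conjI allI)
  show "phi \<in> borel_measurable lborel" using phi_meas by simp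
  show "weakly_equidistributed (curve_int phi x0)" for x0 by (rule weak_main)
  show "\<not> equidistributed (curve_int phi x0)" for x0 by (rule not_equi)
qed

end
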